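(* Fix a wavelength $\lambda>0$, a numerical aperture $NA>0$, a constant $A>0$ and an angle $\theta$. Let $P(\mathbf f)=1$ if $|\mathbf f|<NA/\lambda$ and $P(\mathbf f)=0$ otherwise ($\mathbf f\in\mathbb R^2$). Let $q_n\ge 0$ be an illumination intensity supported in the half-disk $\{\boldsymbol\rho=(\rho\cos\varphi,\rho\sin\varphi): 0\le\rho<NA/\lambda,\ \varphi\in[\theta-\pi/2,\theta+\pi/2]\}$ (central illumination direction $\theta_0=\theta$). Define $$\widetilde H_n(\mathbf f)=iA\iint q_n(\boldsymbol\rho)P^*(\boldsymbol\rho)\big[P(\boldsymbol\rho+\mathbf f)-P(\boldsymbol\rho-\mathbf f)\big]\,d^2\boldsymbol\rho ,\qquad H_n=\mathcal F^{-1}\widetilde H_n .$$ Let $u_\theta(\mathbf r)=\operatorname{sign}\big(\mathbf r\cdot(\cos\theta,\sin\theta)\big)$ be the unit step whose edge is the line through the origin in direction $\mathbf v=(-\sin\theta,\cos\theta)$, and let $g=H_n\otimes u_\theta$. Then $|g(\mathbf r)|\le |g(t\mathbf v)|$ for every $\mathbf r\in\mathbb R^2$, where $t=\mathbf r\cdot\mathbf v$; i.e. the response magnitude is maximal along the line spanned by $\mathbf v$, so $H_n$ is an edge detection filter for edges drawn along $\mathbf v=(-\sin\theta,\cos\theta)$.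
   Context: $\mathcal F^{-1}$ denotes the inverse 2D Fourier transform and $\otimes$ 2D convolution. $P$ is the aberration-free pupil of the objective lens, $q_n$ the intensity of the oblique plane-wave illumination, and $\theta_0$ its central illumination direction. *)

theory Defs
  imports "HOL-Analysis.Analysis"
begin

definition pupil :: "real \<Rightarrow> real \<Rightarrow> real \<times> real \<Rightarrow> complex" where
  "pupil lam NA f = (if norm f < NA / lam then 1 else 0)"

definition half_disk :: "real \<Rightarrow> real \<Rightarrow> real \<Rightarrow> (real \<times> real) set" where
  "half_disk lam NA \<theta> = {(r * cos \<phi>, r * sin \<phi>) | r \<phi>.
      0 \<le> r \<and> r < NA / lam \<and> \<theta> - pi/2 \<le> \<phi> \<and> \<phi> \<le> \<theta> + pi/2}"

definition Htilde :: "real \<Rightarrow> real \<Rightarrow> real \<Rightarrow> (real \<times> real \<Rightarrow> real) \<Rightarrow> real \<times> real \<Rightarrow> complex" where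
  "Htilde A lam NA q f = \<i> * complex_of_real A *
     (LINT \<rho>|lborel. complex_of_real (q \<rho>) * cnj (pupil lam NA \<rho>) *
        (pupil lam NA (\<rho> + f) - pupil lam NA (\<rho> - f)))"

definition inv_FT2 :: "(real \<times> real \<Rightarrow> complex) \<Rightarrow> real \<times> real \<Rightarrow> complex" where
  "inv_FT2 F r = (LINT f|lborel. F f * cis (2 * pi * (f \<bullet> r)))"

definition step_edge :: "real \<Rightarrow> real \<times> real \<Rightarrow> complex" where
  "step_edge \<theta> r = complex_of_real (sgn (r \<bullet> (cos \<theta>, sin \<theta>)))"

text \<open>2D convolution (H (x) u)(r) = \<integral> H(r') u(r - r') d^2r', taken as the limit of the
  integrals over the discs of radius R as R \<rightarrow> \<infinity> (the step u is not integrable,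
  so the integral is understood as an improper one).\<close>
definition conv2 :: "(real \<times> real \<Rightarrow> complex) \<Rightarrow> (real \<times> real \<Rightarrow> complex) \<Rightarrow> real \<times> real \<Rightarrow> complex" where
  "conv2 H u r = Lim at_top (\<lambda>R::real.
      LINT r'|lborel. indicator (ball 0 R) r' * H r' * u (r - r'))"

end

theory Submission
  imports Defs "HOL-Probability.Characteristic_Functions"
begin


lemma cis_measurable[measurable]: "cis \<in> borel_measurable borel"
  by (rule borel_measurable_continuous_onI) (intro continuous_intros)

definition rot :: "real \<Rightarrow> real \<times> real \<Rightarrow> real \<times> real" where
  "rot t x = (fst x * cos t - snd x * sin t, fst x * sin t + snd x * cos t)"

lemma rot_continuous: "continuous_on UNIV (rot t)"
  unfolding rot_def by (intro continuous_intros)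

lemma rot_measurable[measurable]: "rot t \<in> borel_measurable borel"
  by (rule borel_measurable_continuous_onI[OF rot_continuous])

lemma lborel_nn_pair:
  fixes f :: "real \<times> real \<Rightarrow> ennreal"
  assumes [measurable]: "f \<in> borel_measurable borel"
  shows "(\<integral>\<^sup>+x. f x \<partial>lborel) = (\<integral>\<^sup>+a. \<integral>\<^sup>+b. f (a,b) \<partial>lborel \<partial>lborel)"
proof -
  have "(\<integral>\<^sup>+x. f x \<partial>lborel) = (\<integral>\<^sup>+x. f x \<partial>(lborel \<Otimes>\<^sub>M lborel))"
    by (simp add: lborel_prod)
  also have "\<dots> = (\<integral>\<^sup>+a. \<integral>\<^sup>+b. f (a,b) \<partial>lborel \<partial>lborel)"
    by (rule lborel.nn_integral_fst[symmetric]) (simp add: lborel_prod)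
  finally show ?thesis .
qed

lemma rot_nn_aux:
  fixes f :: "real \<times> real \<Rightarrow> ennreal"
  assumes [measurable]: "f \<in> borel_measurable borel" and co: "cos t \<noteq> 0"
  shows "(\<integral>\<^sup>+x. f (rot t x) \<partial>lborel) = (\<integral>\<^sup>+x. f x \<partial>lborel)"
proof -
  define co where "co = cos t"
  define si where "si = sin t"
  have co0: "co \<noteq> 0" using co by (simp add: co_def)
  have cs: "co * co + si * si = (1::real)" unfolding co_def si_def by (metis sin_cos_squared_add3 add.commute)
  have "(\<integral>\<^sup>+x. f (rot t x) \<partial>lborel) = (\<integral>\<^sup>+k. \<integral>\<^sup>+w. f (k * co - w * si, k * si + w * co) \<partial>lborel \<partial>lborel)"
  proof -
    have m: "(\<lambda>x. f (rot t x)) \<in> borel_measurable borel" by measurable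
    show ?thesis using lborel_nn_pair[OF m] by (simp add: rot_def co_def si_def)
  qed
  also have "\<dots> = (\<integral>\<^sup>+k. ennreal (1/\<bar>co\<bar>) * \<integral>\<^sup>+y. f ((k - si * y)/co, y) \<partial>lborel \<partial>lborel)"
  proof (intro nn_integral_cong)
    fix k :: real
    have "(\<integral>\<^sup>+y. f ((k - si * y)/co, y) \<partial>lborel) = \<bar>co\<bar> * (\<integral>\<^sup>+w. f ((k - si * (k * si + co * w))/co, k * si + co * w) \<partial>lborel)"
      by (rule nn_integral_real_affine[OF _ co0]) simp
    also have "(\<lambda>w. f ((k - si * (k * si + co * w))/co, k * si + co * w)) = (\<lambda>w. f (k * co - w * si, k * si + w * co))"
    proof
      fix w
      have e: "k - si * (k * si + co * w) = co * (k * co - w * si)" using cs by algebra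
      have "(k - si * (k * si + co * w))/co = k * co - w * si"
        unfolding e using co0 by simp
      then show "f ((k - si * (k * si + co * w))/co, k * si + co * w) = f (k * co - w * si, k * si + w * co)"
        by (simp add: mult.commute)
    qed
    finally show "(\<integral>\<^sup>+w. f (k * co - w * si, k * si + w * co) \<partial>lborel) = ennreal (1/\<bar>co\<bar>) * \<integral>\<^sup>+y. f ((k - si * y)/co, y) \<partial>lborel"
      using co0 by (simp add: ennreal_mult[symmetric] mult.assoc[symmetric])
  qed
  also have "\<dots> = ennreal (1/\<bar>co\<bar>) * (\<integral>\<^sup>+k. \<integral>\<^sup>+y. f ((k - si * y)/co, y) \<partial>lborel \<partial>lborel)"
    by (rule nn_integral_cmult) measurable
  also have "(\<integral>\<^sup>+k. \<integral>\<^sup>+y. f ((k - si * y)/co, y) \<partial>lborel \<partial>lborel) = (\<integral>\<^sup>+y. \<integral>\<^sup>+k. f ((k - si * y)/co, y) \<partial>lborel \<partial>lborel)"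
    by (rule lborel_pair.Fubini'[symmetric]) measurable
  also have "\<dots> = (\<integral>\<^sup>+y. ennreal \<bar>co\<bar> * \<integral>\<^sup>+x. f (x, y) \<partial>lborel \<partial>lborel)"
  proof (intro nn_integral_cong)
    fix y :: real
    have "(\<integral>\<^sup>+x. f (x, y) \<partial>lborel) = \<bar>1/co\<bar> * (\<integral>\<^sup>+k. f (-si * y/co + (1/co) * k, y) \<partial>lborel)"
      by (rule nn_integral_real_affine) (use co0 in auto)
    also have "(\<lambda>k. f (-si * y/co + (1/co) * k, y)) = (\<lambda>k. f ((k - si * y)/co, y))"
      by (auto simp: diff_divide_distrib)
    finally have "(\<integral>\<^sup>+x. f (x, y) \<partial>lborel) = ennreal (1/\<bar>co\<bar>) * (\<integral>\<^sup>+k. f ((k - si * y)/co, y) \<partial>lborel)"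
      by simp
    then have "ennreal \<bar>co\<bar> * (\<integral>\<^sup>+x. f (x, y) \<partial>lborel) = (ennreal \<bar>co\<bar> * ennreal (1/\<bar>co\<bar>)) * (\<integral>\<^sup>+k. f ((k - si * y)/co, y) \<partial>lborel)"
      by (simp add: mult.assoc)
    also have "ennreal \<bar>co\<bar> * ennreal (1/\<bar>co\<bar>) = 1"
      using co0 by (simp add: ennreal_mult[symmetric])
    finally show "(\<integral>\<^sup>+k. f ((k - si * y)/co, y) \<partial>lborel) = ennreal \<bar>co\<bar> * \<integral>\<^sup>+x. f (x, y) \<partial>lborel"
      by simp
  qed
  also have "\<dots> = ennreal \<bar>co\<bar> * (\<integral>\<^sup>+y. \<integral>\<^sup>+x. f (x, y) \<partial>lborel \<partial>lborel)"
    by (rule nn_integral_cmult) measurable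
  also have "(\<integral>\<^sup>+y. \<integral>\<^sup>+x. f (x, y) \<partial>lborel \<partial>lborel) = (\<integral>\<^sup>+x. \<integral>\<^sup>+y. f (x, y) \<partial>lborel \<partial>lborel)"
    by (rule lborel_pair.Fubini') measurable
  also have "\<dots> = (\<integral>\<^sup>+x. f x \<partial>lborel)"
    by (rule lborel_nn_pair[symmetric]) simp
  finally show ?thesis
    using co0 by (simp add: mult.assoc[symmetric] ennreal_mult[symmetric])
qed


lemma rot_add: "rot a (rot b x) = rot (a + b) x"
  by (simp add: rot_def cos_add sin_add algebra_simps)

lemma rot_nn:
  fixes f :: "real \<times> real \<Rightarrow> ennreal"
  assumes [measurable]: "f \<in> borel_measurable borel"
  shows "(\<integral>\<^sup>+x. f (rot t x) \<partial>lborel) = (\<integral>\<^sup>+x. f x \<partial>lborel)"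
proof (cases "cos t = 0")
  case False
  then show ?thesis by (rule rot_nn_aux[OF assms])
next
  case True
  have "cos (t/2) \<noteq> 0"
  proof
    assume h: "cos (t/2) = 0"
    have "cos t = cos (2 * (t/2))" by simp
    also have "\<dots> = 2 * (cos (t/2))\<^sup>2 - 1" by (rule cos_double_cos)
    finally show False using h True by simp
  qed
  have [measurable]: "(\<lambda>x. f (rot (t/2) x)) \<in> borel_measurable borel" by measurable
  have "(\<integral>\<^sup>+x. f (rot t x) \<partial>lborel) = (\<integral>\<^sup>+x. f (rot (t/2) (rot (t/2) x)) \<partial>lborel)"
    by (simp add: rot_add)
  also have "\<dots> = (\<integral>\<^sup>+x. f (rot (t/2) x) \<partial>lborel)"
    by (rule rot_nn_aux[where f="\<lambda>x. f (rot (t/2) x)"]) fact+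
  also have "\<dots> = (\<integral>\<^sup>+x. f x \<partial>lborel)"
    by (rule rot_nn_aux) fact+
  finally show ?thesis .
qed

lemma distr_rot: "distr lborel borel (rot t) = lborel"
proof (rule measure_eqI)
  show "sets (distr lborel borel (rot t)) = sets lborel" by simp
  fix A assume "A \<in> sets (distr lborel borel (rot t))"
  then have A[measurable]: "A \<in> sets borel" by simp
  have "emeasure (distr lborel borel (rot t)) A = emeasure lborel (rot t -` A)"
    by (simp add: emeasure_distr)
  also have "\<dots> = (\<integral>\<^sup>+x. indicator (rot t -` A) x \<partial>lborel)"
    by (rule nn_integral_indicator[symmetric]) (use measurable_sets[OF rot_measurable A] in simp)
  also have "\<dots> = (\<integral>\<^sup>+x. indicator A (rot t x) \<partial>lborel)"
    by (simp add: indicator_vimage)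
  also have "\<dots> = (\<integral>\<^sup>+x. indicator A x \<partial>lborel)"
    by (rule rot_nn) simp
  also have "\<dots> = emeasure lborel A" by simp
  finally show "emeasure (distr lborel borel (rot t)) A = emeasure lborel A" .
qed

lemma integrable_rot_iff:
  fixes f :: "real \<times> real \<Rightarrow> 'b::{banach, second_countable_topology}"
  assumes [measurable]: "f \<in> borel_measurable borel"
  shows "integrable lborel (\<lambda>x. f (rot t x)) \<longleftrightarrow> integrable lborel f"
proof -
  have "integrable (distr lborel borel (rot t)) f \<longleftrightarrow> integrable lborel (\<lambda>x. f (rot t x))"
    by (rule integrable_distr_eq) auto
  then show ?thesis by (simp add: distr_rot)
qed

lemma integral_rot:
  fixes f :: "real \<times> real \<Rightarrow> 'b::{banach, second_countable_topology}"
  assumes [measurable]: "f \<in> borel_measurable borel"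
  shows "(LINT x|lborel. f (rot t x)) = (LINT x|lborel. f x)"
proof -
  have "integral\<^sup>L (distr lborel borel (rot t)) f = (LINT x|lborel. f (rot t x))"
    by (rule integral_distr) auto
  then show ?thesis by (simp add: distr_rot)
qed

lemma rot_pi: "rot pi x = - x"
  by (cases x) (simp add: rot_def)


lemma prod_integrable:
  fixes f g :: "real \<Rightarrow> 'b::{real_normed_field, banach, second_countable_topology}"
  assumes f: "integrable lborel f" and g: "integrable lborel g"
  shows "integrable (lborel \<Otimes>\<^sub>M lborel) (\<lambda>x. f (fst x) * g (snd x))"
proof (rule lborel_pair.Fubini_integrable)
  have [measurable]: "f \<in> borel_measurable borel" "g \<in> borel_measurable borel"
    using f g by auto
  show "(\<lambda>x. f (fst x) * g (snd x)) \<in> borel_measurable (lborel \<Otimes>\<^sub>M lborel)" by measurable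
  show "integrable lborel (\<lambda>x. LINT y|lborel. norm (f (fst (x, y)) * g (snd (x, y))))"
    by (simp add: norm_mult integrable_mult_left f g)
  show "AE x in lborel. integrable lborel (\<lambda>y. f (fst (x, y)) * g (snd (x, y)))"
    by (simp add: integrable_mult_right g)
qed

lemma prod_integral:
  fixes f g :: "real \<Rightarrow> 'b::{real_normed_field, banach, second_countable_topology}"
  assumes f: "integrable lborel f" and g: "integrable lborel g"
  shows "(LINT x|(lborel \<Otimes>\<^sub>M lborel). f (fst x) * g (snd x)) = (LINT x|lborel. f x) * (LINT x|lborel. g x)"
proof -
  have "(LINT x|(lborel \<Otimes>\<^sub>M lborel). f (fst x) * g (snd x)) = (LINT x|lborel. LINT y|lborel. f x * g y)"
    using lborel_pair.integral_fst[of "\<lambda>x y. f x * g y"] prod_integrable[OF f g]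
    by (simp add: case_prod_beta')
  also have "\<dots> = (LINT x|lborel. f x * (LINT y|lborel. g y))"
    by simp
  also have "\<dots> = (LINT x|lborel. f x) * (LINT x|lborel. g x)"
    by simp
  finally show ?thesis .
qed

definition nvec :: "real \<Rightarrow> real \<times> real" where "nvec t = (cos t, sin t)"
definition vvec :: "real \<Rightarrow> real \<times> real" where "vvec t = (- sin t, cos t)"

lemma rot_inner_n: "rot t x \<bullet> nvec t = fst x"
  by (simp add: rot_def nvec_def inner_prod_def algebra_simps)
     (metis mult.commute distrib_left mult.right_neutral sin_cos_squared_add3 power2_eq_square mult.left_commute)

lemma rot_inner_v: "rot t x \<bullet> vvec t = snd x"
  by (simp add: rot_def vvec_def inner_prod_def algebra_simps)
     (metis mult.commute distrib_left mult.right_neutral sin_cos_squared_add3 power2_eq_square mult.left_commute)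

lemma rot_prod_integrable:
  fixes g h :: "real \<Rightarrow> 'b::{real_normed_field, banach, second_countable_topology}"
  assumes g: "integrable lborel g" and h: "integrable lborel h"
  shows "integrable lborel (\<lambda>r. g (r \<bullet> nvec t) * h (r \<bullet> vvec t))"
proof -
  have [measurable]: "g \<in> borel_measurable borel" "h \<in> borel_measurable borel"
    using g h by auto
  have m: "(\<lambda>r. g (r \<bullet> nvec t) * h (r \<bullet> vvec t)) \<in> borel_measurable borel" by measurable
  have "integrable lborel (\<lambda>x. g (fst x) * h (snd x))"
    using prod_integrable[OF g h] by (simp add: lborel_prod)
  then have "integrable lborel (\<lambda>x. g (rot t x \<bullet> nvec t) * h (rot t x \<bullet> vvec t))"
    by (simp add: rot_inner_n rot_inner_v)
  then show ?thesis using integrable_rot_iff[OF m] by simp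
qed

lemma rot_prod_integral:
  fixes g h :: "real \<Rightarrow> 'b::{real_normed_field, banach, second_countable_topology}"
  assumes g: "integrable lborel g" and h: "integrable lborel h"
  shows "(LINT r|lborel. g (r \<bullet> nvec t) * h (r \<bullet> vvec t)) = (LINT x|lborel. g x) * (LINT x|lborel. h x)"
proof -
  have [measurable]: "g \<in> borel_measurable borel" "h \<in> borel_measurable borel"
    using g h by auto
  have m: "(\<lambda>r. g (r \<bullet> nvec t) * h (r \<bullet> vvec t)) \<in> borel_measurable borel" by measurable
  have "(LINT r|lborel. g (r \<bullet> nvec t) * h (r \<bullet> vvec t)) = (LINT x|lborel. g (rot t x \<bullet> nvec t) * h (rot t x \<bullet> vvec t))"
    using integral_rot[OF m] by simp
  also have "\<dots> = (LINT x|(lborel \<Otimes>\<^sub>M lborel). g (fst x) * h (snd x))"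
    by (simp add: rot_inner_n rot_inner_v lborel_prod)
  also have "\<dots> = (LINT x|lborel. g x) * (LINT x|lborel. h x)"
    by (rule prod_integral[OF g h])
  finally show ?thesis .
qed


lemma std_normal_integrable_real: "integrable lborel std_normal_density"
  using integrable_std_normal_moment[of 0] by simp

lemma std_normal_integral_real: "(LINT x|lborel. std_normal_density x) = 1"
  using integral_std_normal_moment_even[of 0] by simp

lemma gauss_integrable_real:
  assumes "\<sigma> > 0"
  shows "integrable lborel (\<lambda>u. std_normal_density (u / \<sigma>))"
proof -
  have "integrable lborel (\<lambda>u. std_normal_density (0 + (1/\<sigma>) * u))"
    by (rule lborel_integrable_real_affine[OF std_normal_integrable_real]) (use assms in simp)
  then show ?thesis by simp
qed

lemma gauss_integral_real:
  assumes "\<sigma> > 0"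
  shows "(LINT u|lborel. std_normal_density (u / \<sigma>)) = \<sigma>"
proof -
  have "(LINT u|lborel. std_normal_density (u / \<sigma>)) = \<bar>\<sigma>\<bar> *\<^sub>R (LINT x|lborel. std_normal_density ((0 + \<sigma> * x) / \<sigma>))"
    by (rule lborel_integral_real_affine) (use assms in simp)
  also have "\<dots> = \<sigma>" using assms by (simp add: std_normal_integral_real)
  finally show ?thesis .
qed

lemma gauss_cis_integrable:
  assumes "\<sigma> > 0"
  shows "integrable lborel (\<lambda>u. complex_of_real (std_normal_density (u / \<sigma>)) * cis (\<omega> * u))"
proof (rule Bochner_Integration.integrable_bound[OF gauss_integrable_real[OF assms]])
  show "(\<lambda>u. complex_of_real (std_normal_density (u / \<sigma>)) * cis (\<omega> * u)) \<in> borel_measurable lborel"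
    by measurable
  show "AE x in lborel. norm (complex_of_real (std_normal_density (x / \<sigma>)) * cis (\<omega> * x)) \<le> norm (std_normal_density (x / \<sigma>))"
    by (simp add: norm_mult)
qed

lemma gauss_ft:
  assumes "\<sigma> > 0"
  shows "(LINT u|lborel. complex_of_real (std_normal_density (u / \<sigma>)) * cis (\<omega> * u)) = complex_of_real (\<sigma> * exp (- (\<omega> * \<sigma>)\<^sup>2 / 2))"
proof -
  have "(LINT u|lborel. complex_of_real (std_normal_density (u / \<sigma>)) * cis (\<omega> * u))
      = \<bar>\<sigma>\<bar> *\<^sub>R (LINT x|lborel. complex_of_real (std_normal_density ((0 + \<sigma> * x) / \<sigma>)) * cis (\<omega> * (0 + \<sigma> * x)))"
    by (rule lborel_integral_real_affine) (use assms in simp)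
  also have "(LINT x|lborel. complex_of_real (std_normal_density ((0 + \<sigma> * x) / \<sigma>)) * cis (\<omega> * (0 + \<sigma> * x)))
      = (LINT x|lborel. std_normal_density x *\<^sub>R iexp ((\<omega> * \<sigma>) * x))"
    using assms by (intro Bochner_Integration.integral_cong) (auto simp: cis_conv_exp scaleR_conv_of_real mult_ac)
  also have "\<dots> = char std_normal_distribution (\<omega> * \<sigma>)"
    unfolding char_def by (subst integral_density) auto
  also have "\<dots> = complex_of_real (exp (- (\<omega> * \<sigma>)\<^sup>2 / 2))"
    by (simp add: char_std_normal_distribution)
  finally show ?thesis using assms by (simp add: scaleR_conv_of_real)
qed


locale LS =
  fixes lam NA A th :: real and q :: "real \<times> real \<Rightarrow> real"
  assumes lam: "lam > 0" and NA: "NA > 0" and Apos: "A > 0"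
    and qnn: "\<And>\<rho>. q \<rho> \<ge> 0"
    and qm: "q \<in> borel_measurable lborel"
    and qB: "\<exists>B. \<forall>\<rho>. q \<rho> \<le> B"
    and qsupp: "\<And>\<rho>. \<rho> \<notin> half_disk lam NA th \<Longrightarrow> q \<rho> = 0"
begin

definition "R0 = NA / lam"
definition "pr x = (if norm x < R0 then 1 else (0::real))"
definition "K f = (LINT \<rho>|lborel. q \<rho> * (pr (\<rho> + f) - pr (\<rho> - f)))"
definition "Bq = (SOME B. \<forall>\<rho>. q \<rho> \<le> B)"
definition "mball = measure lborel (ball (0::real\<times>real) R0)"
definition "C0 = 2 * Bq * mball"

lemma R0_pos: "R0 > 0" using lam NA by (simp add: R0_def)

lemma q_le_B: "q \<rho> \<le> Bq"
proof -
  have "\<forall>\<rho>. q \<rho> \<le> Bq" unfolding Bq_def by (rule someI_ex[OF qB])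
  then show ?thesis by blast
qed

lemma Bq_nn: "Bq \<ge> 0" using q_le_B[of 0] qnn[of 0] by simp

lemma q_meas[measurable]: "q \<in> borel_measurable borel"
  using qm by simp

lemma pr_meas[measurable]: "pr \<in> borel_measurable borel"
  unfolding pr_def by measurable

lemma pr_01: "pr x = 0 \<or> pr x = 1" by (simp add: pr_def)
lemma pr_nn: "pr x \<ge> 0" by (simp add: pr_def)
lemma pr_le1: "pr x \<le> 1" by (simp add: pr_def)

lemma pupil_pr: "pupil lam NA x = complex_of_real (pr x)"
  by (simp add: pupil_def pr_def R0_def)

lemma half_disk_props:
  assumes "\<rho> \<in> half_disk lam NA th"
  shows "norm \<rho> < R0" "\<rho> \<bullet> nvec th \<ge> 0"
proof -
  from assms obtain r \<phi> where \<rho>: "\<rho> = (r * cos \<phi>, r * sin \<phi>)" and r: "0 \<le> r" "r < R0"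
      and \<phi>: "th - pi/2 \<le> \<phi>" "\<phi> \<le> th + pi/2"
    unfolding half_disk_def R0_def by blast
  have "norm \<rho> = sqrt ((r * cos \<phi>)\<^sup>2 + (r * sin \<phi>)\<^sup>2)"
    by (simp add: \<rho> norm_prod_def)
  also have "(r * cos \<phi>)\<^sup>2 + (r * sin \<phi>)\<^sup>2 = r\<^sup>2"
    by (simp add: power_mult_distrib distrib_left[symmetric])
  finally show "norm \<rho> < R0" using r by simp
  have "\<rho> \<bullet> nvec th = r * cos (\<phi> - th)"
    by (simp add: \<rho> nvec_def inner_prod_def cos_diff algebra_simps)
  also have "\<dots> \<ge> 0" using r \<phi> by (intro mult_nonneg_nonneg cos_ge_zero) auto
  finally show "\<rho> \<bullet> nvec th \<ge> 0" .
qed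

lemma q_nz:
  assumes "q \<rho> \<noteq> 0"
  shows "norm \<rho> < R0" "\<rho> \<bullet> nvec th \<ge> 0"
  using half_disk_props qsupp assms by blast+

lemma q_le_ind: "q \<rho> \<le> Bq * indicator (ball 0 R0) \<rho>"
  using q_le_B[of \<rho>] q_nz[of \<rho>] by (cases "q \<rho> = 0") (auto simp: indicator_def Bq_nn)

lemma mball_fin: "emeasure lborel (ball (0::real\<times>real) R0) < \<infinity>"
  by (rule emeasure_lborel_ball_finite)

lemma integrable_ball_bounded:
  fixes g :: "real \<times> real \<Rightarrow> 'b::{banach, second_countable_topology}"
  assumes [measurable]: "g \<in> borel_measurable borel" and "\<And>x. norm (g x) \<le> M"
    and "\<And>x. x \<notin> ball 0 r \<Longrightarrow> g x = 0"
  shows "integrable lborel g"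
  by (rule integrableI_bounded_set[where A="ball 0 r" and B=M])
     (use assms emeasure_lborel_ball_finite in auto)

lemma K_integrand_integrable: "integrable lborel (\<lambda>\<rho>. q \<rho> * (pr (\<rho> + f) - pr (\<rho> - f)))"
proof (rule integrable_ball_bounded[where M="Bq" and r=R0])
  fix x
  show "norm (q x * (pr (x + f) - pr (x - f))) \<le> Bq"
    using q_le_B[of x] qnn[of x] pr_01[of "x+f"] pr_01[of "x-f"] by (auto simp: abs_mult)
  show "x \<notin> ball 0 R0 \<Longrightarrow> q x * (pr (x + f) - pr (x - f)) = 0"
    using q_nz[of x] by auto
qed measurable

lemma Htilde_K: "Htilde A lam NA q f = \<i> * complex_of_real A * complex_of_real (K f)"
proof -
  have eq: "(\<lambda>\<rho>. complex_of_real (q \<rho>) * cnj (pupil lam NA \<rho>) *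
        (pupil lam NA (\<rho> + f) - pupil lam NA (\<rho> - f))) = (\<lambda>\<rho>. complex_of_real (q \<rho> * (pr (\<rho> + f) - pr (\<rho> - f))))"
  proof
    fix \<rho>
    show "complex_of_real (q \<rho>) * cnj (pupil lam NA \<rho>) * (pupil lam NA (\<rho> + f) - pupil lam NA (\<rho> - f)) =
        complex_of_real (q \<rho> * (pr (\<rho> + f) - pr (\<rho> - f)))"
      using q_nz(1)[of \<rho>] by (cases "q \<rho> = 0") (auto simp: pupil_pr pr_def)
  qed
  show ?thesis unfolding Htilde_def K_def eq integral_complex_of_real ..
qed

lemma K_bound: "\<bar>K f\<bar> \<le> Bq * mball"
proof -
  have "\<bar>K f\<bar> \<le> (LINT \<rho>|lborel. norm (q \<rho> * (pr (\<rho> + f) - pr (\<rho> - f))))"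
    unfolding K_def using integral_norm_bound[of lborel "\<lambda>\<rho>. q \<rho> * (pr (\<rho> + f) - pr (\<rho> - f))"] by simp
  also have "\<dots> \<le> (LINT \<rho>|lborel. Bq * indicator (ball (0::real\<times>real) R0) \<rho>)"
  proof (rule Bochner_Integration.integral_mono)
    show "integrable lborel (\<lambda>\<rho>. norm (q \<rho> * (pr (\<rho> + f) - pr (\<rho> - f))))"
      using K_integrand_integrable by simp
    show "integrable lborel (\<lambda>\<rho>::real\<times>real. Bq * indicator (ball 0 R0) \<rho>)"
      using mball_fin by (intro integrable_mult_right integrable_indicator) auto
    fix \<rho>
    show "norm (q \<rho> * (pr (\<rho> + f) - pr (\<rho> - f))) \<le> Bq * indicator (ball 0 R0) \<rho>"
      using q_le_ind[of \<rho>] qnn[of \<rho>] pr_01[of "\<rho>+f"] pr_01[of "\<rho>-f"] by (auto simp: abs_mult)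
  qed
  also have "\<dots> = Bq * mball"
    using mball_fin by (simp add: mball_def)
  finally show ?thesis .
qed

lemma K_supp:
  assumes "norm f \<ge> 2 * R0"
  shows "K f = 0"
proof -
  have "q \<rho> * (pr (\<rho> + f) - pr (\<rho> - f)) = 0" for \<rho>
  proof (cases "q \<rho> = 0")
    case False
    then have r: "norm \<rho> < R0" by (rule q_nz)
    have "norm f \<le> norm (\<rho> + f) + norm \<rho>" using norm_triangle_ineq4[of "\<rho>+f" \<rho>] by simp
    moreover have "norm f \<le> norm (\<rho> - f) + norm \<rho>" using norm_triangle_ineq4[of \<rho> "\<rho> - f"] by simp
    ultimately have "pr (\<rho> + f) = 0" "pr (\<rho> - f) = 0" using r assms by (auto simp: pr_def)
    then show ?thesis by simp
  qed simp
  then have "(\<lambda>\<rho>. q \<rho> * (pr (\<rho> + f) - pr (\<rho> - f))) = (\<lambda>_. 0)" by (rule ext)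
  then show ?thesis unfolding K_def by simp
qed

lemma K_odd: "K (- f) = - K f"
proof -
  have "K (- f) = (LINT \<rho>|lborel. - (q \<rho> * (pr (\<rho> + f) - pr (\<rho> - f))))"
    unfolding K_def by (intro Bochner_Integration.integral_cong) (auto simp: algebra_simps)
  then show ?thesis by (simp add: K_def)
qed

lemma K_nonpos:
  assumes "k \<ge> 0"
  shows "K (k *\<^sub>R nvec th) \<le> 0"
proof -
  have "0 \<le> (LINT \<rho>|lborel. - (q \<rho> * (pr (\<rho> + k *\<^sub>R nvec th) - pr (\<rho> - k *\<^sub>R nvec th))))"
  proof (rule integral_nonneg_AE, rule AE_I2)
  fix \<rho>
  have "q \<rho> * (pr (\<rho> + k *\<^sub>R nvec th) - pr (\<rho> - k *\<^sub>R nvec th)) \<le> 0"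
  proof (cases "q \<rho> = 0")
    case False
    then have h: "\<rho> \<bullet> nvec th \<ge> 0" by (rule q_nz)
    have nn: "nvec th \<bullet> nvec th = 1" by (simp add: nvec_def inner_prod_def power2_eq_square[symmetric])
    have "(norm (\<rho> - k *\<^sub>R nvec th))\<^sup>2 \<le> (norm (\<rho> + k *\<^sub>R nvec th))\<^sup>2"
      using h assms by (simp add: power2_norm_eq_inner inner_add_left inner_add_right inner_diff_left inner_diff_right inner_commute)
    then have "norm (\<rho> - k *\<^sub>R nvec th) \<le> norm (\<rho> + k *\<^sub>R nvec th)"
      by (simp add: power_mono_iff)
    then have "pr (\<rho> + k *\<^sub>R nvec th) \<le> pr (\<rho> - k *\<^sub>R nvec th)"
      by (auto simp: pr_def)
    then show ?thesis using qnn[of \<rho>] by (simp add: mult_nonneg_nonpos)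
  qed simp
  then show "0 \<le> - (q \<rho> * (pr (\<rho> + k *\<^sub>R nvec th) - pr (\<rho> - k *\<^sub>R nvec th)))" by simp
  qed
  then show ?thesis unfolding K_def by simp
qed

lemma sphere_null: "sphere (c::real\<times>real) r \<in> null_sets lborel"
  using negligible_sphere[of c r]
  by (auto simp: null_sets_completion_iff negligible_iff_null_sets negligible_convex_frontier)

lemma pr_tendsto:
  assumes "norm y \<noteq> R0" and Y: "Y \<longlonglongrightarrow> y"
  shows "(\<lambda>n. pr (Y n)) \<longlonglongrightarrow> pr y"
proof -
  have N: "(\<lambda>n. norm (Y n)) \<longlonglongrightarrow> norm y" using Y by (rule tendsto_norm)
  show ?thesis
  proof (cases "norm y < R0")
    case True
    then have "eventually (\<lambda>n. norm (Y n) < R0) sequentially" using order_tendstoD(2)[OF N] by blast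
    then have "eventually (\<lambda>n. pr (Y n) = pr y) sequentially"
      by eventually_elim (use True in \<open>simp add: pr_def\<close>)
    then show ?thesis by (rule tendsto_eventually)
  next
    case False
    then have "norm y > R0" using assms by simp
    then have "eventually (\<lambda>n. norm (Y n) > R0) sequentially" using order_tendstoD(1)[OF N] by blast
    then have "eventually (\<lambda>n. pr (Y n) = pr y) sequentially"
      by eventually_elim (use False in \<open>simp add: pr_def\<close>)
    then show ?thesis by (rule tendsto_eventually)
  qed
qed

lemma K_cont: "isCont K f"
proof (rule continuous_at_sequentiallyI)
  fix u assume u: "u \<longlonglongrightarrow> f"
  show "(\<lambda>n. K (u n)) \<longlonglongrightarrow> K f" unfolding K_def
  proof (rule integral_dominated_convergence[where w="\<lambda>\<rho>. Bq * indicator (ball (0::real\<times>real) R0) \<rho>"])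
    show "integrable lborel (\<lambda>\<rho>::real\<times>real. Bq * indicator (ball 0 R0) \<rho>)"
      using mball_fin by (intro integrable_mult_right integrable_indicator) auto
    show "(\<lambda>\<rho>. q \<rho> * (pr (\<rho> + f) - pr (\<rho> - f))) \<in> borel_measurable lborel" by measurable
    show "\<And>i. (\<lambda>\<rho>. q \<rho> * (pr (\<rho> + u i) - pr (\<rho> - u i))) \<in> borel_measurable lborel" by measurable
    show "AE x in lborel. norm (q x * (pr (x + u i) - pr (x - u i))) \<le> Bq * indicator (ball 0 R0) x" for i
    proof (rule AE_I2)
      fix x :: "real \<times> real"
      show "norm (q x * (pr (x + u i) - pr (x - u i))) \<le> Bq * indicator (ball 0 R0) x"
        using q_le_ind[of x] qnn[of x] pr_01[of "x + u i"] pr_01[of "x - u i"] by (auto simp: abs_mult)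
    qed
    show "AE x in lborel. (\<lambda>i. q x * (pr (x + u i) - pr (x - u i))) \<longlonglongrightarrow> q x * (pr (x + f) - pr (x - f))"
    proof (rule AE_I'[where N="sphere (-f) R0 \<union> sphere f R0"])
      show "sphere (-f) R0 \<union> sphere f R0 \<in> null_sets lborel" using sphere_null[of "-f" R0] sphere_null[of f R0] by (rule null_sets.Un)
      show "{x \<in> space lborel. \<not> (\<lambda>i. q x * (pr (x + u i) - pr (x - u i))) \<longlonglongrightarrow> q x * (pr (x + f) - pr (x - f))}
          \<subseteq> sphere (- f) R0 \<union> sphere f R0"
      proof (clarsimp)
        fix x assume nl: "\<not> (\<lambda>i. q x * (pr (x + u i) - pr (x - u i))) \<longlonglongrightarrow> q x * (pr (x + f) - pr (x - f))"
          and ns: "dist f x \<noteq> R0"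
        have d1: "norm (x + f) = dist (-f) x"
          using norm_minus_cancel[of "x + f"] by (simp add: dist_norm algebra_simps)
        have d2: "norm (x - f) = dist f x" by (simp add: dist_norm norm_minus_commute)
        show "dist (- f) x = R0"
        proof (rule ccontr)
          assume "dist (- f) x \<noteq> R0"
          then have "(\<lambda>i. pr (x + u i)) \<longlonglongrightarrow> pr (x + f)"
            using d1 by (intro pr_tendsto tendsto_intros u) auto
          moreover have "(\<lambda>i. pr (x - u i)) \<longlonglongrightarrow> pr (x - f)"
            using d2 ns by (intro pr_tendsto tendsto_intros u) auto
          ultimately have "(\<lambda>i. q x * (pr (x + u i) - pr (x - u i))) \<longlonglongrightarrow> q x * (pr (x + f) - pr (x - f))"
            by (intro tendsto_intros)
          then show False using nl by simp
        qed
      qed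
    qed
  qed
qed

lemma K_meas[measurable]: "K \<in> borel_measurable borel"
  by (rule borel_measurable_continuous_onI) (simp add: continuous_at_imp_continuous_on K_cont)

end


lemma gprod_integrable:
  fixes f :: "'a \<Rightarrow> 'c::{real_normed_field, banach, second_countable_topology}"
  assumes M1: "sigma_finite_measure M1" and M2: "sigma_finite_measure M2"
  assumes f: "integrable M1 f" and g: "integrable M2 g"
  shows "integrable (M1 \<Otimes>\<^sub>M M2) (\<lambda>x. f (fst x) * g (snd x))"
proof -
  interpret P: pair_sigma_finite M1 M2 using M1 M2 by (simp add: pair_sigma_finite_def)
  show ?thesis
  proof (rule P.Fubini_integrable)
    have [measurable]: "f \<in> borel_measurable M1" "g \<in> borel_measurable M2"
      using f g by auto
    show "(\<lambda>x. f (fst x) * g (snd x)) \<in> borel_measurable (M1 \<Otimes>\<^sub>M M2)" by measurable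
    show "integrable M1 (\<lambda>x. LINT y|M2. norm (f (fst (x, y)) * g (snd (x, y))))"
      by (simp add: norm_mult integrable_mult_left f g)
    show "AE x in M1. integrable M2 (\<lambda>y. f (fst (x, y)) * g (snd (x, y)))"
      by (simp add: integrable_mult_right g)
  qed
qed

lemma gprod_integral:
  fixes f :: "'a \<Rightarrow> 'c::{real_normed_field, banach, second_countable_topology}"
  assumes M1: "sigma_finite_measure M1" and M2: "sigma_finite_measure M2"
  assumes f: "integrable M1 f" and g: "integrable M2 g"
  shows "(LINT x|(M1 \<Otimes>\<^sub>M M2). f (fst x) * g (snd x)) = (LINT x|M1. f x) * (LINT x|M2. g x)"
proof -
  interpret P: pair_sigma_finite M1 M2 using M1 M2 by (simp add: pair_sigma_finite_def)
  have "(LINT x|(M1 \<Otimes>\<^sub>M M2). f (fst x) * g (snd x)) = (LINT x|M1. LINT y|M2. f x * g y)"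
    using P.integral_fst[of "\<lambda>x y. f x * g y"] gprod_integrable[OF M1 M2 f g]
    by (simp add: case_prod_beta')
  also have "\<dots> = (LINT x|M1. f x * (LINT y|M2. g y))"
    by simp
  also have "\<dots> = (LINT x|M1. f x) * (LINT x|M2. g x)"
    by simp
  finally show ?thesis .
qed

lemma sf_lborel: "sigma_finite_measure (lborel :: ('a::euclidean_space) measure)"
  by (rule sigma_finite_lborel)

lemma sf_lborel2: "sigma_finite_measure (lborel \<Otimes>\<^sub>M (lborel :: ('a::euclidean_space) measure))"
  by (intro sigma_finite_pair_measure sigma_finite_lborel)


lemma iball_bounded:
  fixes g :: "'a::euclidean_space \<Rightarrow> 'b::{banach, second_countable_topology}"
  assumes [measurable]: "g \<in> borel_measurable borel" and "\<And>x. norm (g x) \<le> M"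
    and "\<And>x. x \<notin> ball 0 r \<Longrightarrow> g x = 0"
  shows "integrable lborel g"
  by (rule integrableI_bounded_set[where A="ball 0 r" and B=M])
     (use assms emeasure_lborel_ball_finite in auto)

definition Gam :: "real \<Rightarrow> real \<times> real \<Rightarrow> real" where
  "Gam \<tau> z = \<tau> * std_normal_density (\<tau> * fst z) * (\<tau> * std_normal_density (\<tau> * snd z))"

lemma Gam_nn: "\<tau> > 0 \<Longrightarrow> Gam \<tau> z \<ge> 0"
  by (simp add: Gam_def normal_density_nonneg)

lemma snd_cont: "continuous_on UNIV std_normal_density"
  unfolding normal_density_def by (intro continuous_intros) auto

lemma Gam_meas[measurable]: "Gam \<tau> \<in> borel_measurable borel"
  unfolding Gam_def by (intro borel_measurable_continuous_onI continuous_intros continuous_on_compose2[OF snd_cont]) auto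

lemma gauss1_shift:
  assumes "\<tau> > 0"
  shows "integrable lborel (\<lambda>t. \<tau> * std_normal_density (\<tau> * (a - t)))"
    and "(LINT t|lborel. \<tau> * std_normal_density (\<tau> * (a - t))) = 1"
proof -
  have i0: "integrable lborel (\<lambda>u. \<tau> * std_normal_density u)"
    using std_normal_integrable_real by simp
  have "integrable lborel (\<lambda>t. \<tau> * std_normal_density (\<tau> * a + (- \<tau>) * t))"
    by (rule lborel_integrable_real_affine[OF i0]) (use assms in simp)
  then show "integrable lborel (\<lambda>t. \<tau> * std_normal_density (\<tau> * (a - t)))"
    by (simp add: algebra_simps)
  have "(LINT u|lborel. \<tau> * std_normal_density u) = \<bar>- \<tau>\<bar> *\<^sub>R (LINT t|lborel. \<tau> * std_normal_density (\<tau> * a + (- \<tau>) * t))"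
    by (rule lborel_integral_real_affine) (use assms in simp)
  then have "\<tau> = \<tau> * (LINT t|lborel. \<tau> * std_normal_density (\<tau> * (a - t)))"
    using assms by (simp add: std_normal_integral_real algebra_simps)
  then show "(LINT t|lborel. \<tau> * std_normal_density (\<tau> * (a - t))) = 1"
    using assms by simp
qed

lemma Gam_shift:
  assumes "\<tau> > 0"
  shows "integrable lborel (\<lambda>y. Gam \<tau> (x - y))" and "(LINT y|lborel. Gam \<tau> (x - y)) = 1"
proof -
  let ?g1 = "\<lambda>t. \<tau> * std_normal_density (\<tau> * (fst x - t))"
  let ?g2 = "\<lambda>t. \<tau> * std_normal_density (\<tau> * (snd x - t))"
  have e: "(\<lambda>y. Gam \<tau> (x - y)) = (\<lambda>y. ?g1 (fst y) * ?g2 (snd y))"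
    by (auto simp: Gam_def)
  have "integrable (lborel \<Otimes>\<^sub>M lborel) (\<lambda>y. ?g1 (fst y) * ?g2 (snd y))"
    by (rule gprod_integrable[OF sf_lborel sf_lborel gauss1_shift(1)[OF assms] gauss1_shift(1)[OF assms]])
  then show "integrable lborel (\<lambda>y. Gam \<tau> (x - y))" unfolding e by (simp add: lborel_prod)
  have "(LINT y|(lborel \<Otimes>\<^sub>M lborel). ?g1 (fst y) * ?g2 (snd y)) = 1"
    by (subst gprod_integral[OF sf_lborel sf_lborel gauss1_shift(1)[OF assms] gauss1_shift(1)[OF assms]])
       (use gauss1_shift(2)[OF assms, of "fst x"] gauss1_shift(2)[OF assms, of "snd x"] in simp)
  then show "(LINT y|lborel. Gam \<tau> (x - y)) = 1" unfolding e by (simp add: lborel_prod)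
qed

definition W2 :: "real \<Rightarrow> real \<times> real \<Rightarrow> real" where
  "W2 \<sigma> \<xi> = 2 * pi * std_normal_density (fst \<xi> / \<sigma>) * std_normal_density (snd \<xi> / \<sigma>)"

lemma W2_meas[measurable]: "W2 \<sigma> \<in> borel_measurable borel"
  unfolding W2_def divide_inverse by (intro borel_measurable_continuous_onI continuous_intros continuous_on_compose2[OF snd_cont]) auto

lemma W2_exp: "W2 \<sigma> \<xi> = exp (- ((fst \<xi>)\<^sup>2 + (snd \<xi>)\<^sup>2) / (2 * \<sigma>\<^sup>2))"
proof -
  have "W2 \<sigma> \<xi> = (2 * pi) / (sqrt (2 * pi) * sqrt (2 * pi)) * (exp (- (fst \<xi> / \<sigma>)\<^sup>2 / 2) * exp (- (snd \<xi> / \<sigma>)\<^sup>2 / 2))"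
    by (simp add: W2_def normal_density_def)
  also have "(2 * pi) / (sqrt (2 * pi) * sqrt (2 * pi)) = 1" by simp
  also have "exp (- (fst \<xi> / \<sigma>)\<^sup>2 / 2) * exp (- (snd \<xi> / \<sigma>)\<^sup>2 / 2) = exp (- ((fst \<xi>)\<^sup>2 + (snd \<xi>)\<^sup>2) / (2 * \<sigma>\<^sup>2))"
  proof (cases "\<sigma> = 0")
    case False
    then show ?thesis by (simp add: exp_add[symmetric] power_divide field_simps)
  qed simp
  finally show ?thesis by simp
qed

lemma W2_nn: "W2 \<sigma> \<xi> \<ge> 0" by (simp add: W2_exp)
lemma W2_le1: "W2 \<sigma> \<xi> \<le> 1"
proof -
  have "- ((fst \<xi>)\<^sup>2 + (snd \<xi>)\<^sup>2) / (2 * \<sigma>\<^sup>2) \<le> 0"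
    by (intro divide_nonpos_nonneg) auto
  then show ?thesis unfolding W2_exp by simp
qed

lemma W2_integrable:
  assumes "\<sigma> > 0"
  shows "integrable lborel (W2 \<sigma>)"
proof -
  have "integrable (lborel \<Otimes>\<^sub>M lborel) (\<lambda>\<xi>. (2 * pi * std_normal_density (fst \<xi> / \<sigma>)) * std_normal_density (snd \<xi> / \<sigma>))"
    by (rule gprod_integrable[OF sf_lborel sf_lborel]) (auto intro!: integrable_mult_right gauss_integrable_real assms)
  then show ?thesis unfolding W2_def by (simp add: lborel_prod)
qed

lemma W2_ft:
  assumes "\<sigma> > 0"
  shows "(LINT \<xi>|lborel. complex_of_real (W2 \<sigma> \<xi>) * cis (2 * pi * (z \<bullet> \<xi>))) = complex_of_real (Gam (2 * pi * \<sigma>) z)"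
proof -
  let ?F = "\<lambda>a t. complex_of_real (sqrt (2 * pi)) * (complex_of_real (std_normal_density (t / \<sigma>)) * cis ((2 * pi * a) * t))"
  have e: "(\<lambda>\<xi>. complex_of_real (W2 \<sigma> \<xi>) * cis (2 * pi * (z \<bullet> \<xi>))) = (\<lambda>\<xi>. ?F (fst z) (fst \<xi>) * ?F (snd z) (snd \<xi>))"
  proof
    fix \<xi> :: "real \<times> real"
    have "cis (2 * pi * (z \<bullet> \<xi>)) = cis ((2 * pi * fst z) * fst \<xi>) * cis ((2 * pi * snd z) * snd \<xi>)"
      by (simp add: inner_prod_def cis_mult algebra_simps)
    moreover have "complex_of_real (W2 \<sigma> \<xi>) = complex_of_real (sqrt (2 * pi)) * complex_of_real (std_normal_density (fst \<xi> / \<sigma>)) * (complex_of_real (sqrt (2 * pi)) * complex_of_real (std_normal_density (snd \<xi> / \<sigma>)))"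
    proof -
      have "complex_of_real (sqrt (2 * pi)) * complex_of_real (sqrt (2 * pi)) = complex_of_real (2 * pi)"
        by (simp only: of_real_mult[symmetric]) simp
      then show ?thesis unfolding W2_def of_real_mult by (simp add: algebra_simps)
    qed
    ultimately show "complex_of_real (W2 \<sigma> \<xi>) * cis (2 * pi * (z \<bullet> \<xi>)) = ?F (fst z) (fst \<xi>) * ?F (snd z) (snd \<xi>)"
      by (simp add: algebra_simps)
  qed
  have iF: "integrable lborel (?F a)" for a
    by (intro integrable_mult_right gauss_cis_integrable assms)
  have vF: "(LINT t|lborel. ?F a t) = complex_of_real (2 * pi * \<sigma> * std_normal_density (2 * pi * \<sigma> * a))" for a
  proof -
    have "(LINT t|lborel. ?F a t) = complex_of_real (sqrt (2 * pi)) * complex_of_real (\<sigma> * exp (- (2 * pi * a * \<sigma>)\<^sup>2 / 2))"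
      by (simp add: gauss_ft[OF assms])
    also have "\<dots> = complex_of_real (2 * pi * \<sigma> * std_normal_density (2 * pi * \<sigma> * a))"
    proof -
      have "sqrt (2 * pi) * (\<sigma> * exp (- (2 * pi * a * \<sigma>)\<^sup>2 / 2)) = 2 * pi * \<sigma> * std_normal_density (2 * pi * \<sigma> * a)"
      proof -
        have s: "sqrt (2 * pi) * sqrt (2 * pi) = 2 * pi" by simp
        have "2 * pi * \<sigma> * std_normal_density (2 * pi * \<sigma> * a) = (2 * pi) / sqrt (2 * pi) * \<sigma> * exp (- (2 * pi * \<sigma> * a)\<^sup>2 / 2)"
          by (simp add: normal_density_def)
        also have "(2 * pi) / sqrt (2 * pi) = sqrt (2 * pi)"
          by (metis s nonzero_mult_div_cancel_right pi_gt_zero real_sqrt_eq_zero_cancel_iff mult_eq_0_iff zero_neq_numeral pi_neq_zero)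
        finally show ?thesis by (simp add: mult_ac) metis
      qed
      then show ?thesis by (simp only: of_real_mult[symmetric])
    qed
    finally show ?thesis .
  qed
  have "(LINT \<xi>|lborel. complex_of_real (W2 \<sigma> \<xi>) * cis (2 * pi * (z \<bullet> \<xi>))) = (LINT \<xi>|(lborel \<Otimes>\<^sub>M lborel). ?F (fst z) (fst \<xi>) * ?F (snd z) (snd \<xi>))"
    unfolding e by (simp add: lborel_prod)
  also have "\<dots> = (LINT t|lborel. ?F (fst z) t) * (LINT t|lborel. ?F (snd z) t)"
    by (rule gprod_integral[OF sf_lborel sf_lborel iF iF])
  also have "\<dots> = complex_of_real (Gam (2 * pi * \<sigma>) z)"
    unfolding vF Gam_def by (simp only: of_real_mult[symmetric] mult_ac)
  finally show ?thesis .
qed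


definition ft :: "(real \<times> real \<Rightarrow> real) \<Rightarrow> real \<times> real \<Rightarrow> complex" where
  "ft b \<xi> = (LINT x|lborel. complex_of_real (b x) * cis (2 * pi * (x \<bullet> \<xi>)))"

locale L2b =
  fixes b :: "real \<times> real \<Rightarrow> real" and M r :: real
  assumes bm[measurable]: "b \<in> borel_measurable borel"
    and bM: "\<And>x. \<bar>b x\<bar> \<le> M"
    and bs: "\<And>x. x \<notin> ball 0 r \<Longrightarrow> b x = 0"
begin

lemma M_nn: "M \<ge> 0" using bM[of 0] by simp

lemma b_int: "integrable lborel b"
  by (rule iball_bounded[where M=M and r=r]) (use bM bs in auto)

lemma absb_int: "integrable lborel (\<lambda>x. \<bar>b x\<bar>)"
  using b_int by simp

definition "Ib = (LINT x|lborel. \<bar>b x\<bar>)"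

lemma ft_integrand_int: "integrable lborel (\<lambda>x. complex_of_real (b x) * cis (2 * pi * (x \<bullet> \<xi>)))"
  by (rule Bochner_Integration.integrable_bound[OF absb_int]) (auto simp: norm_mult)

lemma ft_meas[measurable]: "ft b \<in> borel_measurable borel"
  unfolding ft_def by measurable

lemma ft_bound: "cmod (ft b \<xi>) \<le> Ib"
proof -
  have "cmod (ft b \<xi>) \<le> (LINT x|lborel. norm (complex_of_real (b x) * cis (2 * pi * (x \<bullet> \<xi>))))"
    unfolding ft_def by (rule integral_norm_bound)
  also have "\<dots> = Ib" by (simp add: Ib_def norm_mult)
  finally show ?thesis .
qed

lemma Ib_nn: "Ib \<ge> 0" unfolding Ib_def by (rule integral_nonneg_AE) auto

lemma sq_eq: "complex_of_real ((cmod (ft b \<xi>))\<^sup>2) =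
   (LINT p|(lborel \<Otimes>\<^sub>M lborel). complex_of_real (b (fst p) * b (snd p)) * cis (2 * pi * ((fst p - snd p) \<bullet> \<xi>)))"
proof -
  have c: "cnj (ft b \<xi>) = (LINT y|lborel. complex_of_real (b y) * cis (- (2 * pi * (y \<bullet> \<xi>))))"
    unfolding ft_def Bochner_Integration.integral_cnj[symmetric] by (simp add: cis_cnj)
  have i2: "integrable lborel (\<lambda>y. complex_of_real (b y) * cis (- (2 * pi * (y \<bullet> \<xi>))))"
    by (rule Bochner_Integration.integrable_bound[OF absb_int]) (auto simp: norm_mult)
  have "complex_of_real ((cmod (ft b \<xi>))\<^sup>2) = ft b \<xi> * cnj (ft b \<xi>)"
    by (rule complex_norm_square)
  also have "\<dots> = (LINT p|(lborel \<Otimes>\<^sub>M lborel). (complex_of_real (b (fst p)) * cis (2 * pi * (fst p \<bullet> \<xi>))) * (complex_of_real (b (snd p)) * cis (- (2 * pi * (snd p \<bullet> \<xi>)))))"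
    apply (subst c) unfolding ft_def
    by (rule gprod_integral[OF sf_lborel sf_lborel ft_integrand_int i2, symmetric])
  also have "\<dots> = (LINT p|(lborel \<Otimes>\<^sub>M lborel). complex_of_real (b (fst p) * b (snd p)) * cis (2 * pi * ((fst p - snd p) \<bullet> \<xi>)))"
  proof (intro Bochner_Integration.integral_cong refl)
    fix p :: "(real \<times> real) \<times> (real \<times> real)"
    have "cis (2 * pi * (fst p \<bullet> \<xi>)) * cis (- (2 * pi * (snd p \<bullet> \<xi>))) = cis (2 * pi * ((fst p - snd p) \<bullet> \<xi>))"
      by (simp add: cis_mult inner_diff_left algebra_simps)
    then show "(complex_of_real (b (fst p)) * cis (2 * pi * (fst p \<bullet> \<xi>))) * (complex_of_real (b (snd p)) * cis (- (2 * pi * (snd p \<bullet> \<xi>))))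
      = complex_of_real (b (fst p) * b (snd p)) * cis (2 * pi * ((fst p - snd p) \<bullet> \<xi>))"
      by (simp add: algebra_simps)
  qed
  finally show ?thesis .
qed

lemma weighted_eq:
  assumes \<sigma>: "\<sigma> > 0"
  shows "(LINT \<xi>|lborel. W2 \<sigma> \<xi> * (cmod (ft b \<xi>))\<^sup>2) =
     (LINT p|(lborel \<Otimes>\<^sub>M lborel). b (fst p) * b (snd p) * Gam (2 * pi * \<sigma>) (fst p - snd p))"
proof -
  interpret P: pair_sigma_finite lborel "lborel \<Otimes>\<^sub>M lborel :: ((real \<times> real) \<times> (real \<times> real)) measure"
    unfolding pair_sigma_finite_def using sf_lborel sf_lborel2 by blast
  define F where "F \<xi> p = complex_of_real (b (fst p) * b (snd p)) * (complex_of_real (W2 \<sigma> \<xi>) * cis (2 * pi * ((fst p - snd p) \<bullet> (\<xi>::real\<times>real))))" for \<xi> p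
  have bb_int: "integrable (lborel \<Otimes>\<^sub>M lborel) (\<lambda>p::(real\<times>real)\<times>(real\<times>real). \<bar>b (fst p)\<bar> * \<bar>b (snd p)\<bar>)"
    by (rule gprod_integrable[OF sf_lborel sf_lborel absb_int absb_int])
  have Fint: "integrable (lborel \<Otimes>\<^sub>M (lborel \<Otimes>\<^sub>M lborel)) (\<lambda>x. F (fst x) (snd x))"
  proof (rule Bochner_Integration.integrable_bound)
    show "integrable (lborel \<Otimes>\<^sub>M (lborel \<Otimes>\<^sub>M lborel)) (\<lambda>x. W2 \<sigma> (fst x) * (\<bar>b (fst (snd x))\<bar> * \<bar>b (snd (snd x))\<bar>))"
      by (rule gprod_integrable[OF sf_lborel sf_lborel2 W2_integrable[OF \<sigma>] bb_int])
    show "(\<lambda>x. F (fst x) (snd x)) \<in> borel_measurable (lborel \<Otimes>\<^sub>M (lborel \<Otimes>\<^sub>M lborel))"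
      unfolding F_def by measurable
    show "AE x in lborel \<Otimes>\<^sub>M (lborel \<Otimes>\<^sub>M lborel). norm (F (fst x) (snd x)) \<le> norm (W2 \<sigma> (fst x) * (\<bar>b (fst (snd x))\<bar> * \<bar>b (snd (snd x))\<bar>))"
      by (rule AE_I2) (simp add: F_def norm_mult abs_mult W2_nn)
  qed
  then have Fint': "integrable (lborel \<Otimes>\<^sub>M (lborel \<Otimes>\<^sub>M lborel)) (case_prod F)"
    by (simp add: case_prod_beta')
  have "(LINT \<xi>|lborel. LINT p|(lborel \<Otimes>\<^sub>M lborel). F \<xi> p) = (LINT p|(lborel \<Otimes>\<^sub>M lborel). LINT \<xi>|lborel. F \<xi> p)"
    by (rule P.Fubini_integral[OF Fint', symmetric])
  also have "(LINT \<xi>|lborel. LINT p|(lborel \<Otimes>\<^sub>M lborel). F \<xi> p) = (LINT \<xi>|lborel. complex_of_real (W2 \<sigma> \<xi> * (cmod (ft b \<xi>))\<^sup>2))"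
  proof (intro Bochner_Integration.integral_cong refl)
    fix \<xi> :: "real \<times> real"
    have "(LINT p|(lborel \<Otimes>\<^sub>M lborel). F \<xi> p) = (LINT p|(lborel \<Otimes>\<^sub>M lborel). complex_of_real (W2 \<sigma> \<xi>) * (complex_of_real (b (fst p) * b (snd p)) * cis (2 * pi * ((fst p - snd p) \<bullet> \<xi>))))"
      unfolding F_def by (intro Bochner_Integration.integral_cong refl) (simp add: algebra_simps)
    also have "\<dots> = complex_of_real (W2 \<sigma> \<xi>) * complex_of_real ((cmod (ft b \<xi>))\<^sup>2)"
      unfolding sq_eq by (rule integral_mult_right_zero)
    finally show "(LINT p|(lborel \<Otimes>\<^sub>M lborel). F \<xi> p) = complex_of_real (W2 \<sigma> \<xi> * (cmod (ft b \<xi>))\<^sup>2)"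
      by simp
  qed
  also have "(LINT p|(lborel \<Otimes>\<^sub>M lborel). LINT \<xi>|lborel. F \<xi> p) = (LINT p|(lborel \<Otimes>\<^sub>M lborel). complex_of_real (b (fst p) * b (snd p) * Gam (2 * pi * \<sigma>) (fst p - snd p)))"
  proof (intro Bochner_Integration.integral_cong refl)
    fix p :: "(real \<times> real) \<times> (real \<times> real)"
    have "(LINT \<xi>|lborel. F \<xi> p) = complex_of_real (b (fst p) * b (snd p)) * (LINT \<xi>|lborel. complex_of_real (W2 \<sigma> \<xi>) * cis (2 * pi * ((fst p - snd p) \<bullet> \<xi>)))"
      unfolding F_def by simp
    also have "\<dots> = complex_of_real (b (fst p) * b (snd p) * Gam (2 * pi * \<sigma>) (fst p - snd p))"
      by (simp add: W2_ft[OF \<sigma>])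
    finally show "(LINT \<xi>|lborel. F \<xi> p) = complex_of_real (b (fst p) * b (snd p) * Gam (2 * pi * \<sigma>) (fst p - snd p))" .
  qed
  finally have "(LINT \<xi>|lborel. complex_of_real (W2 \<sigma> \<xi> * (cmod (ft b \<xi>))\<^sup>2)) =
      (LINT p|(lborel \<Otimes>\<^sub>M lborel). complex_of_real (b (fst p) * b (snd p) * Gam (2 * pi * \<sigma>) (fst p - snd p)))" .
  then show ?thesis unfolding integral_complex_of_real of_real_eq_iff .
qed

lemma schur_bound:
  assumes \<tau>: "\<tau> > 0"
  shows "(LINT p|(lborel \<Otimes>\<^sub>M lborel). b (fst p) * b (snd p) * Gam \<tau> (fst p - snd p)) \<le> M * Ib"
proof -
  define g where "g p = \<bar>b (fst p)\<bar> * Gam \<tau> (fst p - snd p)" for p :: "(real \<times> real) \<times> (real \<times> real)"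
  have gm[measurable]: "g \<in> borel_measurable (lborel \<Otimes>\<^sub>M lborel)" unfolding g_def by measurable
  have gint: "integrable (lborel \<Otimes>\<^sub>M lborel) g"
  proof (rule lborel_pair.Fubini_integrable)
    show "g \<in> borel_measurable (lborel \<Otimes>\<^sub>M lborel)" by (rule gm)
    have "(\<lambda>x. LINT y|lborel. norm (g (x, y))) = (\<lambda>x. \<bar>b x\<bar>)"
    proof
      fix x
      have "(LINT y|lborel. norm (g (x, y))) = (LINT y|lborel. \<bar>b x\<bar> * Gam \<tau> (x - y))"
        by (intro Bochner_Integration.integral_cong refl) (simp add: g_def abs_mult Gam_nn[OF \<tau>])
      also have "\<dots> = \<bar>b x\<bar>" using Gam_shift(2)[OF \<tau>, of x] by simp
      finally show "(LINT y|lborel. norm (g (x, y))) = \<bar>b x\<bar>" .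
    qed
    then show "integrable lborel (\<lambda>x. LINT y|lborel. norm (g (x, y)))" using absb_int by simp
    show "AE x in lborel. integrable lborel (\<lambda>y. g (x, y))"
      unfolding g_def by (intro AE_I2 integrable_mult_right) (simp add: Gam_shift(1)[OF \<tau>])
  qed
  have gval: "(LINT p|(lborel \<Otimes>\<^sub>M lborel). g p) = Ib"
  proof -
    have "(LINT p|(lborel \<Otimes>\<^sub>M lborel). g p) = (LINT x|lborel. LINT y|lborel. g (x, y))"
      using lborel_pair.integral_fst[of "\<lambda>x y. g (x, y)"] gint by simp
    also have "\<dots> = (LINT x|lborel. \<bar>b x\<bar>)"
    proof (intro Bochner_Integration.integral_cong refl)
      fix x
      show "(LINT y|lborel. g (x, y)) = \<bar>b x\<bar>"
        using Gam_shift(2)[OF \<tau>, of x] by (simp add: g_def)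
    qed
    finally show ?thesis by (simp add: Ib_def)
  qed
  have int2: "integrable (lborel \<Otimes>\<^sub>M lborel) (\<lambda>p. b (fst p) * b (snd p) * Gam \<tau> (fst p - snd p))"
  proof (rule Bochner_Integration.integrable_bound[OF integrable_mult_right[OF gint, of M]])
    show "(\<lambda>p. b (fst p) * b (snd p) * Gam \<tau> (fst p - snd p)) \<in> borel_measurable (lborel \<Otimes>\<^sub>M lborel)"
      by measurable
    show "AE x in lborel \<Otimes>\<^sub>M lborel. norm (b (fst x) * b (snd x) * Gam \<tau> (fst x - snd x)) \<le> norm (M * g x)"
    proof (rule AE_I2)
      fix x :: "(real \<times> real) \<times> (real \<times> real)"
      have "\<bar>b (fst x) * b (snd x) * Gam \<tau> (fst x - snd x)\<bar> = \<bar>b (fst x)\<bar> * \<bar>b (snd x)\<bar> * Gam \<tau> (fst x - snd x)"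
        by (simp add: abs_mult Gam_nn[OF \<tau>])
      also have "\<dots> \<le> \<bar>b (fst x)\<bar> * M * Gam \<tau> (fst x - snd x)"
        using bM[of "snd x"] Gam_nn[OF \<tau>, of "fst x - snd x"] by (intro mult_right_mono mult_left_mono) auto
      also have "\<dots> = M * g x" unfolding g_def by (simp only: mult_ac)
      also have "\<dots> = \<bar>M * g x\<bar>" using M_nn Gam_nn[OF \<tau>] by (simp add: g_def)
      finally show "norm (b (fst x) * b (snd x) * Gam \<tau> (fst x - snd x)) \<le> norm (M * g x)" by simp
    qed
  qed
  have "(LINT p|(lborel \<Otimes>\<^sub>M lborel). b (fst p) * b (snd p) * Gam \<tau> (fst p - snd p)) \<le> (LINT p|(lborel \<Otimes>\<^sub>M lborel). M * g p)"
  proof (rule Bochner_Integration.integral_mono[OF int2 integrable_mult_right[OF gint]])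
    fix x :: "(real \<times> real) \<times> (real \<times> real)"
    have "b (fst x) * b (snd x) * Gam \<tau> (fst x - snd x) \<le> \<bar>b (fst x) * b (snd x) * Gam \<tau> (fst x - snd x)\<bar>" by simp
    also have "\<dots> = \<bar>b (fst x)\<bar> * \<bar>b (snd x)\<bar> * Gam \<tau> (fst x - snd x)"
      by (simp add: abs_mult Gam_nn[OF \<tau>])
    also have "\<dots> \<le> \<bar>b (fst x)\<bar> * M * Gam \<tau> (fst x - snd x)"
      using bM[of "snd x"] Gam_nn[OF \<tau>, of "fst x - snd x"] by (intro mult_right_mono mult_left_mono) auto
    also have "\<dots> = M * g x" unfolding g_def by (simp only: mult_ac)
    finally show "b (fst x) * b (snd x) * Gam \<tau> (fst x - snd x) \<le> M * g x" .
  qed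
  also have "\<dots> = M * Ib" by (simp add: gval)
  finally show ?thesis .
qed

lemma weighted_int:
  assumes \<sigma>: "\<sigma> > 0"
  shows "integrable lborel (\<lambda>\<xi>. W2 \<sigma> \<xi> * (cmod (ft b \<xi>))\<^sup>2)"
proof (rule Bochner_Integration.integrable_bound[OF integrable_mult_left[OF W2_integrable[OF \<sigma>], of "Ib\<^sup>2"]])
  show "(\<lambda>\<xi>. W2 \<sigma> \<xi> * (cmod (ft b \<xi>))\<^sup>2) \<in> borel_measurable lborel" by measurable
  show "AE x in lborel. norm (W2 \<sigma> x * (cmod (ft b x))\<^sup>2) \<le> norm (W2 \<sigma> x * Ib\<^sup>2)"
  proof (rule AE_I2)
    fix x
    have "(cmod (ft b x))\<^sup>2 \<le> Ib\<^sup>2" by (intro power_mono ft_bound) auto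
    then show "norm (W2 \<sigma> x * (cmod (ft b x))\<^sup>2) \<le> norm (W2 \<sigma> x * Ib\<^sup>2)"
      by (simp add: abs_mult W2_nn mult_left_mono)
  qed
qed

lemma weighted_le:
  assumes \<sigma>: "\<sigma> > 0"
  shows "(LINT \<xi>|lborel. W2 \<sigma> \<xi> * (cmod (ft b \<xi>))\<^sup>2) \<le> M * Ib"
  unfolding weighted_eq[OF \<sigma>] by (rule schur_bound) (use \<sigma> in simp)

lemma W2_mono: "0 < s \<Longrightarrow> s \<le> t \<Longrightarrow> W2 s \<xi> \<le> W2 t \<xi>"
proof -
  assume st: "0 < s" "s \<le> t"
  let ?c = "(fst \<xi>)\<^sup>2 + (snd \<xi>)\<^sup>2"
  have "?c / (2 * t\<^sup>2) \<le> ?c / (2 * s\<^sup>2)"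
    using st by (intro divide_left_mono mult_left_mono power_mono) auto
  then have "- (?c / (2 * s\<^sup>2)) \<le> - (?c / (2 * t\<^sup>2))" by linarith
  then have "exp (- ?c / (2 * s\<^sup>2)) \<le> exp (- ?c / (2 * t\<^sup>2))"
    by (simp only: minus_divide_left exp_le_cancel_iff)
  then show ?thesis unfolding W2_exp .
qed

lemma W2_lim: "(\<lambda>m. W2 (real (Suc m)) \<xi>) \<longlonglongrightarrow> 1"
proof -
  let ?c = "(fst \<xi>)\<^sup>2 + (snd \<xi>)\<^sup>2"
  have e: "W2 (real (Suc m)) \<xi> = exp (- (?c / 2) * (inverse (real (Suc m)))\<^sup>2)" for m
    unfolding W2_exp by (simp add: field_simps power_inverse)
  have "(\<lambda>m. exp (- (?c / 2) * (inverse (real (Suc m)))\<^sup>2)) \<longlonglongrightarrow> exp (- (?c / 2) * 0\<^sup>2)"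
    by (intro tendsto_intros LIMSEQ_inverse_real_of_nat)
  then show ?thesis unfolding e by simp
qed

lemma ft_sq_integrable: "integrable lborel (\<lambda>\<xi>. (cmod (ft b \<xi>))\<^sup>2)"
proof -
  let ?S = "\<lambda>\<xi>. (cmod (ft b \<xi>))\<^sup>2"
  let ?f = "\<lambda>m \<xi>. ennreal (W2 (real (Suc m)) \<xi> * ?S \<xi>)"
  have inc: "incseq ?f"
    by (intro incseq_SucI le_funI ennreal_leI mult_right_mono W2_mono) auto
  have sup: "(SUP m. ?f m \<xi>) = ennreal (?S \<xi>)" for \<xi>
  proof -
    have "(\<lambda>m. ?f m \<xi>) \<longlonglongrightarrow> (SUP m. ?f m \<xi>)"
      by (rule LIMSEQ_SUP) (intro incseq_SucI ennreal_leI mult_right_mono W2_mono, auto)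
    moreover have "(\<lambda>m. ?f m \<xi>) \<longlonglongrightarrow> ennreal (1 * ?S \<xi>)"
      by (intro tendsto_ennrealI tendsto_mult W2_lim tendsto_const)
    ultimately show ?thesis using LIMSEQ_unique by fastforce
  qed
  have "(\<integral>\<^sup>+\<xi>. ennreal (?S \<xi>) \<partial>lborel) = (\<integral>\<^sup>+\<xi>. (SUP m. ?f m \<xi>) \<partial>lborel)"
    unfolding sup ..
  also have "\<dots> = (SUP m. \<integral>\<^sup>+\<xi>. ?f m \<xi> \<partial>lborel)"
    by (rule nn_integral_monotone_convergence_SUP[OF inc]) measurable
  also have "\<dots> \<le> ennreal (M * Ib)"
  proof (rule SUP_least)
    fix m
    have "(\<integral>\<^sup>+\<xi>. ?f m \<xi> \<partial>lborel) = ennreal (LINT \<xi>|lborel. W2 (real (Suc m)) \<xi> * ?S \<xi>)"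
      by (rule nn_integral_eq_integral[OF weighted_int]) (auto simp: W2_nn)
    also have "\<dots> \<le> ennreal (M * Ib)"
      by (intro ennreal_leI weighted_le) auto
    finally show "(\<integral>\<^sup>+\<xi>. ?f m \<xi> \<partial>lborel) \<le> ennreal (M * Ib)" .
  qed
  also have "\<dots> < \<infinity>" by simp
  finally show ?thesis
    by (intro integrableI_nonneg) auto
qed

end


lemma ball_sets[measurable]: "ball (c::'a::euclidean_space) r \<in> sets borel"
  by simp

lemma integral_translate:
  fixes g :: "'a::euclidean_space \<Rightarrow> 'b::{banach, second_countable_topology}"
  assumes [measurable]: "g \<in> borel_measurable borel"
  shows "(LINT f|lborel. g (c + f)) = (LINT x|lborel. g x)"
proof -
  have "integral\<^sup>L (distr lborel borel ((+) c)) g = (LINT f|lborel. g (c + f))"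
    by (rule integral_distr) auto
  then show ?thesis by (simp add: lborel_distr_plus)
qed

lemma integral_reflect:
  fixes g :: "real \<times> real \<Rightarrow> 'b::{banach, second_countable_topology}"
  assumes [measurable]: "g \<in> borel_measurable borel"
  shows "(LINT f|lborel. g (- f)) = (LINT x|lborel. g x)"
  using integral_rot[OF assms, of pi] by (simp add: rot_pi)

lemma integrable_reflect:
  fixes g :: "real \<times> real \<Rightarrow> 'b::{banach, second_countable_topology}"
  assumes [measurable]: "g \<in> borel_measurable borel"
  shows "integrable lborel (\<lambda>f. g (- f)) \<longleftrightarrow> integrable lborel g"
  using integrable_rot_iff[OF assms, of pi] by (simp add: rot_pi)

lemma ft_neg: "ft b (- r) = cnj (ft b r)"
  unfolding ft_def Bochner_Integration.integral_cnj[symmetric]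
  by (simp add: cis_cnj)

context LS begin

definition "Hf r = inv_FT2 (Htilde A lam NA q) r"

lemma kz: "norm f \<ge> 2 * R0 \<Longrightarrow> q \<rho> * (pr (\<rho> + f) - pr (\<rho> - f)) = 0"
proof (cases "q \<rho> = 0")
  case False
  assume assms: "norm f \<ge> 2 * R0"
  then have r: "norm \<rho> < R0" using False by (intro q_nz)
  have "norm f \<le> norm (\<rho> + f) + norm \<rho>" using norm_triangle_ineq4[of "\<rho>+f" \<rho>] by simp
  moreover have "norm f \<le> norm (\<rho> - f) + norm \<rho>" using norm_triangle_ineq4[of \<rho> "\<rho> - f"] by simp
  ultimately have "pr (\<rho> + f) = 0" "pr (\<rho> - f) = 0" using r assms by (auto simp: pr_def)
  then show ?thesis by simp
qed simp

lemma pr_L2: "L2b pr 1 R0"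
  by unfold_locales (auto simp: pr_def)

lemma q_L2: "L2b q Bq R0"
proof unfold_locales
  fix x show "\<bar>q x\<bar> \<le> Bq" using qnn[of x] q_le_B[of x] by simp
  show "x \<notin> ball 0 R0 \<Longrightarrow> q x = 0" for x using q_nz(1)[of x] by force
qed simp

lemma Hf_formula: "Hf r = \<i> * complex_of_real A * (ft pr r * ft q (- r) - ft pr (- r) * ft q r)"
proof -
  define F where "F f \<rho> = complex_of_real (q \<rho> * (pr (\<rho> + f) - pr (\<rho> - f))) * cis (2 * pi * (f \<bullet> r))" for f \<rho> :: "real \<times> real"
  have Fm[measurable]: "case_prod F \<in> borel_measurable (lborel \<Otimes>\<^sub>M lborel)"
    unfolding F_def by measurable
  have Fint: "integrable (lborel \<Otimes>\<^sub>M lborel) (case_prod F)"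
  proof (rule Bochner_Integration.integrable_bound)
    show "integrable (lborel \<Otimes>\<^sub>M lborel) (\<lambda>x. indicator (ball (0::real\<times>real) (2 * R0)) (fst x) * (Bq * indicator (ball (0::real\<times>real) R0) (snd x)))"
      by (intro gprod_integrable[OF sf_lborel sf_lborel] integrable_mult_right integrable_real_indicator)
         (use emeasure_lborel_ball_finite[of "0::real\<times>real" "2 * R0"] emeasure_lborel_ball_finite[of "0::real\<times>real" R0] in auto)
    show "case_prod F \<in> borel_measurable (lborel \<Otimes>\<^sub>M lborel)" by (rule Fm)
    show "AE x in lborel \<Otimes>\<^sub>M lborel. norm (case_prod F x) \<le> norm (indicator (ball (0::real\<times>real) (2 * R0)) (fst x) * (Bq * indicator (ball (0::real\<times>real) R0) (snd x)))"
    proof (rule AE_I2, clarify)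
      fix f \<rho> :: "real \<times> real"
      show "norm (F f \<rho>) \<le> norm (indicator (ball (0::real\<times>real) (2 * R0)) (fst (f, \<rho>)) * (Bq * indicator (ball (0::real\<times>real) R0) (snd (f, \<rho>))))"
      proof (cases "norm f < 2 * R0")
        case True
        have "norm (F f \<rho>) = \<bar>q \<rho> * (pr (\<rho> + f) - pr (\<rho> - f))\<bar>" unfolding F_def norm_mult norm_cis norm_of_real by simp
        also have "\<dots> \<le> Bq * indicator (ball 0 R0) \<rho>"
          using q_le_ind[of \<rho>] qnn[of \<rho>] pr_01[of "\<rho>+f"] pr_01[of "\<rho>-f"] by (auto simp: abs_mult)
        finally show ?thesis using True Bq_nn by (simp add: abs_mult)
      next
        case False
        then show ?thesis using kz[of f \<rho>] by (simp add: F_def)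
      qed
    qed
  qed
  have T1: "(LINT f|lborel. complex_of_real (pr (\<rho> + f)) * cis (2 * pi * (f \<bullet> r))) = cis (- (2 * pi * (\<rho> \<bullet> r))) * ft pr r" for \<rho>
  proof -
    have "(LINT f|lborel. complex_of_real (pr (\<rho> + f)) * cis (2 * pi * (f \<bullet> r))) =
        (LINT f|lborel. (\<lambda>x. complex_of_real (pr x) * cis (2 * pi * ((x - \<rho>) \<bullet> r))) (\<rho> + f))"
      by simp
    also have "\<dots> = (LINT x|lborel. complex_of_real (pr x) * cis (2 * pi * ((x - \<rho>) \<bullet> r)))"
      by (rule integral_translate) measurable
    also have "\<dots> = (LINT x|lborel. cis (- (2 * pi * (\<rho> \<bullet> r))) * (complex_of_real (pr x) * cis (2 * pi * (x \<bullet> r))))"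
      by (intro Bochner_Integration.integral_cong refl) (simp add: inner_diff_left cis_mult algebra_simps)
    also have "\<dots> = cis (- (2 * pi * (\<rho> \<bullet> r))) * ft pr r"
      unfolding ft_def by simp
    finally show ?thesis .
  qed
  have T2: "(LINT f|lborel. complex_of_real (pr (\<rho> - f)) * cis (2 * pi * (f \<bullet> r))) = cis (2 * pi * (\<rho> \<bullet> r)) * ft pr (- r)" for \<rho>
  proof -
    have "(LINT f|lborel. complex_of_real (pr (\<rho> - f)) * cis (2 * pi * (f \<bullet> r))) =
        (LINT f|lborel. (\<lambda>f. complex_of_real (pr (\<rho> + f)) * cis (- (2 * pi * (f \<bullet> r)))) (- f))"
      by simp
    also have "\<dots> = (LINT f|lborel. complex_of_real (pr (\<rho> + f)) * cis (- (2 * pi * (f \<bullet> r))))"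
      by (rule integral_reflect) measurable
    also have "\<dots> = (LINT f|lborel. (\<lambda>x. complex_of_real (pr x) * cis (- (2 * pi * ((x - \<rho>) \<bullet> r)))) (\<rho> + f))"
      by simp
    also have "\<dots> = (LINT x|lborel. complex_of_real (pr x) * cis (- (2 * pi * ((x - \<rho>) \<bullet> r))))"
      by (rule integral_translate) measurable
    also have "\<dots> = (LINT x|lborel. cis (2 * pi * (\<rho> \<bullet> r)) * (complex_of_real (pr x) * cis (2 * pi * (x \<bullet> - r))))"
      by (intro Bochner_Integration.integral_cong refl) (simp add: inner_diff_left cis_mult algebra_simps)
    also have "\<dots> = cis (2 * pi * (\<rho> \<bullet> r)) * ft pr (- r)"
      unfolding ft_def by simp
    finally show ?thesis .
  qed
  interpret Lp: L2b pr 1 R0 by (rule pr_L2)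
  interpret Lq: L2b q Bq R0 by (rule q_L2)
  have "Hf r = (LINT f|lborel. \<i> * complex_of_real A * (LINT \<rho>|lborel. F f \<rho>))"
    unfolding Hf_def inv_FT2_def Htilde_K
  proof (intro Bochner_Integration.integral_cong refl)
    fix f :: "real \<times> real"
    have "(LINT \<rho>|lborel. F f \<rho>) = (LINT \<rho>|lborel. complex_of_real (q \<rho> * (pr (\<rho> + f) - pr (\<rho> - f)))) * cis (2 * pi * (f \<bullet> r))"
      unfolding F_def by (rule integral_mult_left_zero)
    also have "\<dots> = complex_of_real (K f) * cis (2 * pi * (f \<bullet> r))"
      unfolding K_def integral_complex_of_real ..
    finally show "\<i> * complex_of_real A * complex_of_real (K f) * cis (2 * pi * (f \<bullet> r)) = \<i> * complex_of_real A * (LINT \<rho>|lborel. F f \<rho>)"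
      by (simp add: mult.assoc)
  qed
  also have "\<dots> = \<i> * complex_of_real A * (LINT f|lborel. LINT \<rho>|lborel. F f \<rho>)"
    by simp
  also have "(LINT f|lborel. LINT \<rho>|lborel. F f \<rho>) = (LINT \<rho>|lborel. LINT f|lborel. F f \<rho>)"
    by (rule lborel_pair.Fubini_integral[OF Fint, symmetric])
  also have "\<dots> = (LINT \<rho>|lborel. complex_of_real (q \<rho>) * (cis (- (2 * pi * (\<rho> \<bullet> r))) * ft pr r - cis (2 * pi * (\<rho> \<bullet> r)) * ft pr (- r)))"
  proof (intro Bochner_Integration.integral_cong refl)
    fix \<rho> :: "real \<times> real"
    have i1: "integrable lborel (\<lambda>f. complex_of_real (pr (\<rho> + f)) * cis (2 * pi * (f \<bullet> r)))"
    proof (rule iball_bounded[where M=1 and r="R0 + norm \<rho>"])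
      show "(\<lambda>f. complex_of_real (pr (\<rho> + f)) * cis (2 * pi * (f \<bullet> r))) \<in> borel_measurable borel" by measurable
      show "norm (complex_of_real (pr (\<rho> + f)) * cis (2 * pi * (f \<bullet> r))) \<le> 1" for f
        by (simp add: norm_mult pr_def)
      fix f :: "real \<times> real" assume "f \<notin> ball 0 (R0 + norm \<rho>)"
      then have "norm f \<ge> R0 + norm \<rho>" by simp
      moreover have "norm f \<le> norm (\<rho> + f) + norm \<rho>" using norm_triangle_ineq4[of "\<rho>+f" \<rho>] by simp
      ultimately show "complex_of_real (pr (\<rho> + f)) * cis (2 * pi * (f \<bullet> r)) = 0" by (simp add: pr_def)
    qed
    show "(LINT f|lborel. F f \<rho>) = complex_of_real (q \<rho>) * (cis (- (2 * pi * (\<rho> \<bullet> r))) * ft pr r - cis (2 * pi * (\<rho> \<bullet> r)) * ft pr (- r))"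
    proof -
      have i2: "integrable lborel (\<lambda>f. complex_of_real (pr (\<rho> - f)) * cis (2 * pi * (f \<bullet> r)))"
      proof (rule iball_bounded[where M=1 and r="R0 + norm \<rho>"])
        show "(\<lambda>f. complex_of_real (pr (\<rho> - f)) * cis (2 * pi * (f \<bullet> r))) \<in> borel_measurable borel" by measurable
        show "norm (complex_of_real (pr (\<rho> - f)) * cis (2 * pi * (f \<bullet> r))) \<le> 1" for f
          by (simp add: norm_mult pr_def)
        fix f :: "real \<times> real" assume "f \<notin> ball 0 (R0 + norm \<rho>)"
        then have "norm f \<ge> R0 + norm \<rho>" by simp
        moreover have "norm f \<le> norm (\<rho> - f) + norm \<rho>" using norm_triangle_ineq4[of \<rho> "\<rho> - f"] by simp
        ultimately show "complex_of_real (pr (\<rho> - f)) * cis (2 * pi * (f \<bullet> r)) = 0" by (simp add: pr_def)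
      qed
      have "(LINT f|lborel. F f \<rho>) = (LINT f|lborel. complex_of_real (q \<rho>) * (complex_of_real (pr (\<rho> + f)) * cis (2 * pi * (f \<bullet> r)) - complex_of_real (pr (\<rho> - f)) * cis (2 * pi * (f \<bullet> r))))"
        unfolding F_def by (intro Bochner_Integration.integral_cong refl) (simp add: algebra_simps)
      also have "\<dots> = complex_of_real (q \<rho>) * ((LINT f|lborel. complex_of_real (pr (\<rho> + f)) * cis (2 * pi * (f \<bullet> r))) - (LINT f|lborel. complex_of_real (pr (\<rho> - f)) * cis (2 * pi * (f \<bullet> r))))"
        by (simp add: Bochner_Integration.integral_diff[OF i1 i2])
      also have "\<dots> = complex_of_real (q \<rho>) * (cis (- (2 * pi * (\<rho> \<bullet> r))) * ft pr r - cis (2 * pi * (\<rho> \<bullet> r)) * ft pr (- r))"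
        by (simp add: T1 T2)
      finally show ?thesis .
    qed
  qed
  also have "\<dots> = ft pr r * ft q (- r) - ft pr (- r) * ft q r"
  proof -
    have j1: "integrable lborel (\<lambda>\<rho>. ft pr r * (complex_of_real (q \<rho>) * cis (2 * pi * (\<rho> \<bullet> - r))))"
      by (intro integrable_mult_right Lq.ft_integrand_int)
    have j2: "integrable lborel (\<lambda>\<rho>. ft pr (- r) * (complex_of_real (q \<rho>) * cis (2 * pi * (\<rho> \<bullet> r))))"
      by (intro integrable_mult_right Lq.ft_integrand_int)
    have "(LINT \<rho>|lborel. complex_of_real (q \<rho>) * (cis (- (2 * pi * (\<rho> \<bullet> r))) * ft pr r - cis (2 * pi * (\<rho> \<bullet> r)) * ft pr (- r)))
       = (LINT \<rho>|lborel. ft pr r * (complex_of_real (q \<rho>) * cis (2 * pi * (\<rho> \<bullet> - r))) - ft pr (- r) * (complex_of_real (q \<rho>) * cis (2 * pi * (\<rho> \<bullet> r))))"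
      by (intro Bochner_Integration.integral_cong refl) (simp add: algebra_simps)
    also have "\<dots> = ft pr r * ft q (- r) - ft pr (- r) * ft q r"
      by (subst Bochner_Integration.integral_diff[OF j1 j2]) (simp add: ft_def)
    finally show ?thesis .
  qed
  finally show ?thesis by simp
qed

lemma Hf_meas[measurable]: "Hf \<in> borel_measurable borel"
proof -
  interpret Lp: L2b pr 1 R0 by (rule pr_L2)
  interpret Lq: L2b q Bq R0 by (rule q_L2)
  have "(\<lambda>r. \<i> * complex_of_real A * (ft pr r * ft q (- r) - ft pr (- r) * ft q r)) \<in> borel_measurable borel"
    by measurable
  then show ?thesis by (simp add: Hf_formula[abs_def])
qed

lemma Hf_meas_lborel[measurable]: "Hf \<in> borel_measurable lborel"
  by simp

lemma Hf_int: "integrable lborel Hf"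
proof -
  interpret Lp: L2b pr 1 R0 by (rule pr_L2)
  interpret Lq: L2b q Bq R0 by (rule q_L2)
  show ?thesis
  proof (rule Bochner_Integration.integrable_bound)
    show "integrable lborel (\<lambda>r. A * ((cmod (ft pr r))\<^sup>2 + (cmod (ft q r))\<^sup>2))"
      by (intro integrable_mult_right Bochner_Integration.integrable_add Lp.ft_sq_integrable Lq.ft_sq_integrable)
    show "Hf \<in> borel_measurable lborel" by simp
    show "AE x in lborel. norm (Hf x) \<le> norm (A * ((cmod (ft pr x))\<^sup>2 + (cmod (ft q x))\<^sup>2))"
    proof (rule AE_I2)
      fix x
      let ?a = "cmod (ft pr x)" and ?b = "cmod (ft q x)"
      have "norm (Hf x) = A * cmod (ft pr x * ft q (- x) - ft pr (- x) * ft q x)"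
        using Apos by (simp add: Hf_formula norm_mult)
      also have "\<dots> \<le> A * (?a * ?b + ?a * ?b)"
      proof -
        have "cmod (ft pr x * ft q (- x) - ft pr (- x) * ft q x) \<le> cmod (ft pr x * ft q (- x)) + cmod (ft pr (- x) * ft q x)"
          by (rule norm_triangle_ineq4)
        also have "\<dots> = ?a * ?b + ?a * ?b" by (simp add: norm_mult ft_neg)
        finally show ?thesis using Apos by simp
      qed
      also have "\<dots> \<le> A * (?a\<^sup>2 + ?b\<^sup>2)"
      proof -
        have "0 \<le> (?a - ?b)\<^sup>2" by simp
        then have "?a * ?b + ?a * ?b \<le> ?a\<^sup>2 + ?b\<^sup>2" by (simp add: power2_diff mult_ac)
        then show ?thesis using Apos by simp
      qed
      also have "\<dots> = norm (A * ((cmod (ft pr x))\<^sup>2 + (cmod (ft q x))\<^sup>2))" using Apos by simp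
      finally show "norm (Hf x) \<le> norm (A * ((cmod (ft pr x))\<^sup>2 + (cmod (ft q x))\<^sup>2))" .
    qed
  qed
qed

lemma Hf_odd: "Hf (- r) = - Hf r"
  by (simp add: Hf_formula algebra_simps)

lemma Hf_integral0: "(LINT r|lborel. Hf r) = 0"
proof -
  have "(LINT r|lborel. Hf r) = (LINT r|lborel. Hf (- r))"
    by (rule integral_reflect[symmetric]) simp
  also have "\<dots> = - (LINT r|lborel. Hf r)" by (simp add: Hf_odd)
  finally show ?thesis by simp
qed

definition "G s = (LINT r|lborel. Hf r * complex_of_real (sgn (s - r \<bullet> nvec th)))"

lemma G_integrand_int: "integrable lborel (\<lambda>r. Hf r * complex_of_real (g (r \<bullet> nvec th)))"
  if [measurable]: "g \<in> borel_measurable borel" and "\<And>x. \<bar>g x\<bar> \<le> c" for g c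
proof (rule Bochner_Integration.integrable_bound[OF integrable_mult_right[OF integrable_norm[OF Hf_int], of c]])
  show "(\<lambda>r. Hf r * complex_of_real (g (r \<bullet> nvec th))) \<in> borel_measurable lborel" by measurable
  show "AE x in lborel. norm (Hf x * complex_of_real (g (x \<bullet> nvec th))) \<le> norm (c * norm (Hf x))"
  proof (rule AE_I2)
    fix x
    have "norm (Hf x * complex_of_real (g (x \<bullet> nvec th))) = norm (Hf x) * \<bar>g (x \<bullet> nvec th)\<bar>"
      by (simp add: norm_mult)
    also have "\<dots> \<le> norm (Hf x) * c" by (intro mult_left_mono that) auto
    also have "\<dots> \<le> norm (c * norm (Hf x))" using abs_ge_self[of c] by (simp add: abs_mult mult.commute mult_right_mono)
    finally show "norm (Hf x * complex_of_real (g (x \<bullet> nvec th))) \<le> norm (c * norm (Hf x))" .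
  qed
qed

lemma conv2_G: "conv2 (inv_FT2 (Htilde A lam NA q)) (step_edge th) r = G (r \<bullet> nvec th)"
proof -
  have e: "inv_FT2 (Htilde A lam NA q) = Hf" by (simp add: Hf_def[abs_def])
  have st: "step_edge th (r - r') = complex_of_real (sgn (r \<bullet> nvec th - r' \<bullet> nvec th))" for r'
    by (simp add: step_edge_def nvec_def inner_diff_left)
  have "((\<lambda>R. LINT r'|lborel. indicator (ball 0 R) r' * Hf r' * step_edge th (r - r')) \<longlongrightarrow> G (r \<bullet> nvec th)) at_top"
    unfolding G_def st
  proof (rule integral_dominated_convergence_at_top[where w="\<lambda>r. norm (Hf r)"])
    show "(\<lambda>r'. Hf r' * complex_of_real (sgn (r \<bullet> nvec th - r' \<bullet> nvec th))) \<in> borel_measurable lborel" by measurable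
    show "(\<lambda>r'. indicator (ball 0 R) r' * Hf r' * complex_of_real (sgn (r \<bullet> nvec th - r' \<bullet> nvec th))) \<in> borel_measurable lborel" for R :: real
      by measurable
    show "integrable lborel (\<lambda>r. norm (Hf r))" using Hf_int by simp
    show "AE x in lborel. ((\<lambda>R. indicator (ball 0 R) x * Hf x * complex_of_real (sgn (r \<bullet> nvec th - x \<bullet> nvec th))) \<longlongrightarrow> Hf x * complex_of_real (sgn (r \<bullet> nvec th - x \<bullet> nvec th))) at_top"
    proof (rule AE_I2)
      fix x :: "real \<times> real"
      have "eventually (\<lambda>R. indicator (ball 0 R) x * Hf x * complex_of_real (sgn (r \<bullet> nvec th - x \<bullet> nvec th)) = Hf x * complex_of_real (sgn (r \<bullet> nvec th - x \<bullet> nvec th))) at_top"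
        using eventually_gt_at_top[of "norm x"] by eventually_elim (simp add: indicator_def)
      then show "((\<lambda>R. indicator (ball 0 R) x * Hf x * complex_of_real (sgn (r \<bullet> nvec th - x \<bullet> nvec th))) \<longlongrightarrow> Hf x * complex_of_real (sgn (r \<bullet> nvec th - x \<bullet> nvec th))) at_top"
        by (rule tendsto_eventually)
    qed
    show "\<forall>\<^sub>F R in at_top. AE x in lborel. norm (indicator (ball 0 R) x * Hf x * complex_of_real (sgn (r \<bullet> nvec th - x \<bullet> nvec th))) \<le> norm (Hf x)"
      by (intro always_eventually allI AE_I2) (auto simp: norm_mult indicator_def sgn_real_def)
  qed
  then show ?thesis unfolding conv2_def e by (rule tendsto_Lim[OF trivial_limit_at_top_linorder])
qed

end


lemma norm_rot: "norm (rot t x) = norm x"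
proof -
  have cs: "(sin t)\<^sup>2 + (cos t)\<^sup>2 = 1" by simp
  have "(fst x * cos t - snd x * sin t)\<^sup>2 + (fst x * sin t + snd x * cos t)\<^sup>2 = (fst x)\<^sup>2 + (snd x)\<^sup>2"
    using cs by algebra
  then show ?thesis by (simp add: rot_def norm_prod_def)
qed

lemma rot_k0: "rot t (k, 0) = k *\<^sub>R nvec t"
  by (simp add: rot_def nvec_def)

lemma inner_split: "f \<bullet> r = (f \<bullet> nvec t) * (r \<bullet> nvec t) + (f \<bullet> vvec t) * (r \<bullet> vvec t)"
proof -
  have "(fst f * cos t + snd f * sin t) * (fst r * cos t + snd r * sin t) + (- fst f * sin t + snd f * cos t) * (- fst r * sin t + snd r * cos t)
      = fst f * fst r * ((sin t)\<^sup>2 + (cos t)\<^sup>2) + snd f * snd r * ((sin t)\<^sup>2 + (cos t)\<^sup>2)"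
    by algebra
  then show ?thesis by (simp add: inner_prod_def nvec_def vvec_def)
qed

definition Dsg :: "real \<Rightarrow> real \<Rightarrow> real" where "Dsg s x = sgn (s - x) - sgn (- x)"
definition damp :: "real \<Rightarrow> real \<Rightarrow> real" where "damp m y = sqrt (2 * pi) * std_normal_density (y / m)"
definition Dh :: "real \<Rightarrow> real \<Rightarrow> complex" where "Dh s k = (LINT x|lborel. complex_of_real (Dsg s x) * cis (2 * pi * k * x))"
definition Psir :: "real \<Rightarrow> real \<Rightarrow> real" where "Psir m w = 2 * pi * m * std_normal_density (2 * pi * m * w)"

lemma Dsg_meas[measurable]: "Dsg s \<in> borel_measurable borel"
  unfolding Dsg_def by measurable

lemma Dsg_bound: "\<bar>Dsg s x\<bar> \<le> 2"
  by (auto simp: Dsg_def sgn_real_def)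

lemma Dsg_zero: "\<bar>x\<bar> > \<bar>s\<bar> \<Longrightarrow> Dsg s x = 0"
  by (auto simp: Dsg_def sgn_real_def)

lemma Dsg_int: "integrable lborel (Dsg s)"
  by (rule iball_bounded[where M=2 and r="\<bar>s\<bar> + 1"]) (auto simp: Dsg_bound intro!: Dsg_zero)

lemma damp_meas[measurable]: "damp m \<in> borel_measurable borel"
  unfolding damp_def by measurable

lemma damp_nn: "damp m y \<ge> 0" by (simp add: damp_def normal_density_nonneg)

lemma damp_exp: "damp m y = exp (- (y / m)\<^sup>2 / 2)"
  by (simp add: damp_def normal_density_def)

lemma damp_le1: "damp m y \<le> 1"
proof -
  have "damp m y = exp (- (y / m)\<^sup>2 / 2)"
    by (rule damp_exp)
  also have "\<dots> \<le> 1" by simp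
  finally show ?thesis .
qed

lemma damp_int: "m > 0 \<Longrightarrow> integrable lborel (damp m)"
  unfolding damp_def by (intro integrable_mult_right gauss_integrable_real)

lemma damp_lim: "(\<lambda>j. damp (real (Suc j)) y) \<longlonglongrightarrow> 1"
proof -
  have e: "damp (real (Suc j)) y = exp (- (y * inverse (real (Suc j)))\<^sup>2 / 2)" for j
    unfolding damp_exp divide_inverse ..
  have "(\<lambda>j. exp (- (y * inverse (real (Suc j)))\<^sup>2 / 2)) \<longlonglongrightarrow> exp (- (y * 0)\<^sup>2 / 2)"
    by (intro tendsto_intros LIMSEQ_inverse_real_of_nat) auto
  then show ?thesis unfolding e by simp
qed

lemma damp_ft: "m > 0 \<Longrightarrow> (LINT y|lborel. complex_of_real (damp m y) * cis (2 * pi * w * y)) = complex_of_real (Psir m w)"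
proof -
  assume m: "m > 0"
  have "(LINT y|lborel. complex_of_real (damp m y) * cis (2 * pi * w * y)) =
      complex_of_real (sqrt (2 * pi)) * (LINT y|lborel. complex_of_real (std_normal_density (y / m)) * cis ((2 * pi * w) * y))"
    by (simp add: damp_def mult.assoc)
  also have "\<dots> = complex_of_real (sqrt (2 * pi) * (m * exp (- ((2 * pi * w) * m)\<^sup>2 / 2)))"
    by (simp add: gauss_ft[OF m])
  also have "sqrt (2 * pi) * (m * exp (- ((2 * pi * w) * m)\<^sup>2 / 2)) = Psir m w"
  proof -
    have s: "sqrt (2 * pi) * sqrt (2 * pi) = 2 * pi" by simp
    have "Psir m w = (2 * pi) / sqrt (2 * pi) * m * exp (- (2 * pi * m * w)\<^sup>2 / 2)"
      by (simp add: Psir_def normal_density_def)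
    also have "(2 * pi) / sqrt (2 * pi) = sqrt (2 * pi)"
      by (metis s nonzero_mult_div_cancel_right pi_gt_zero real_sqrt_eq_zero_cancel_iff mult_eq_0_iff zero_neq_numeral pi_neq_zero)
    finally show ?thesis by (simp add: mult_ac)
  qed
  finally show ?thesis .
qed

lemma Psir_nn: "m > 0 \<Longrightarrow> Psir m w \<ge> 0" by (simp add: Psir_def normal_density_nonneg)

lemma Psir_int: "m > 0 \<Longrightarrow> integrable lborel (Psir m)"
proof -
  assume m: "m > 0"
  have "integrable lborel (\<lambda>w. 2 * pi * m * std_normal_density (0 + (2 * pi * m) * w))"
    by (intro integrable_mult_right lborel_integrable_real_affine[OF std_normal_integrable_real]) (use m in simp)
  then show ?thesis by (simp add: Psir_def[abs_def])
qed

lemma Psir_meas[measurable]: "Psir m \<in> borel_measurable borel"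
  unfolding Psir_def by measurable


lemma Dh_meas[measurable]: "Dh s \<in> borel_measurable borel"
  unfolding Dh_def by measurable

definition "Ds1 s = (LINT x|lborel. \<bar>Dsg s x\<bar>)"

lemma Dh_bound: "cmod (Dh s k) \<le> Ds1 s"
proof -
  have "cmod (Dh s k) \<le> (LINT x|lborel. norm (complex_of_real (Dsg s x) * cis (2 * pi * k * x)))"
    unfolding Dh_def by (rule integral_norm_bound)
  also have "\<dots> = Ds1 s" by (simp add: Ds1_def norm_mult)
  finally show ?thesis .
qed

lemma Ds1_nn: "Ds1 s \<ge> 0" unfolding Ds1_def by (rule integral_nonneg_AE) auto

lemma Dsg_cis_int: "integrable lborel (\<lambda>x. complex_of_real (Dsg s x) * cis (c * x))"
  by (rule Bochner_Integration.integrable_bound[OF integrable_norm[OF Dsg_int[of s]]]) (auto simp: norm_mult)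

lemma damp_cis_int: "m > 0 \<Longrightarrow> integrable lborel (\<lambda>x. complex_of_real (damp m x) * cis (c * x))"
  by (rule Bochner_Integration.integrable_bound[OF integrable_norm[OF damp_int]]) (auto simp: norm_mult)

context LS begin

definition "KB = Bq * mball"

lemma KB_nn: "KB \<ge> 0" unfolding KB_def mball_def using Bq_nn by simp

lemma K_bound': "\<bar>K f\<bar> \<le> KB" using K_bound by (simp add: KB_def)

lemma K_int: "integrable lborel K"
proof (rule iball_bounded[where M=KB and r="2 * R0"])
  show "norm (K x) \<le> KB" for x using K_bound' by simp
  show "x \<notin> ball 0 (2 * R0) \<Longrightarrow> K x = 0" for x by (intro K_supp) simp
qed simp

lemma K_rot_zero: "\<bar>k\<bar> \<ge> 2 * R0 \<Longrightarrow> K (rot th (k, w)) = 0"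
proof (rule K_supp)
  assume "\<bar>k\<bar> \<ge> 2 * R0"
  moreover have "\<bar>k\<bar> \<le> norm (k, w)"
    by (simp add: norm_prod_def real_le_rsqrt)
  ultimately show "norm (rot th (k, w)) \<ge> 2 * R0" by (simp add: norm_rot)
qed

lemma Hf_def2: "Hf r = (LINT f|lborel. \<i> * complex_of_real A * complex_of_real (K f) * cis (2 * pi * (f \<bullet> r)))"
  by (simp add: Hf_def inv_FT2_def Htilde_K)

lemma G_diff: "G s - G 0 = (LINT r|lborel. Hf r * complex_of_real (Dsg s (r \<bullet> nvec th)))"
proof -
  have i1: "integrable lborel (\<lambda>r. Hf r * complex_of_real ((\<lambda>x. sgn (s - x)) (r \<bullet> nvec th)))"
    by (rule G_integrand_int[where c=1]) (auto simp: sgn_real_def)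
  have i2: "integrable lborel (\<lambda>r. Hf r * complex_of_real ((\<lambda>x. sgn (0 - x)) (r \<bullet> nvec th)))"
    by (rule G_integrand_int[where c=1]) (auto simp: sgn_real_def)
  have "G s - G 0 = (LINT r|lborel. Hf r * complex_of_real ((\<lambda>x. sgn (s - x)) (r \<bullet> nvec th)) - Hf r * complex_of_real ((\<lambda>x. sgn (0 - x)) (r \<bullet> nvec th)))"
    unfolding G_def by (rule Bochner_Integration.integral_diff[OF i1 i2, symmetric])
  also have "\<dots> = (LINT r|lborel. Hf r * complex_of_real (Dsg s (r \<bullet> nvec th)))"
    by (intro Bochner_Integration.integral_cong refl) (simp add: Dsg_def algebra_simps)
  finally show ?thesis .
qed

definition "V s m = (LINT r|lborel. Hf r * complex_of_real (Dsg s (r \<bullet> nvec th) * damp m (r \<bullet> vvec th)))"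

lemma V_lim: "(\<lambda>j. V s (real (Suc j))) \<longlonglongrightarrow> G s - G 0"
  unfolding G_diff V_def
proof (rule integral_dominated_convergence[where w="\<lambda>r. 2 * norm (Hf r)"])
  show "integrable lborel (\<lambda>r. 2 * norm (Hf r))" using Hf_int by simp
  show "(\<lambda>r. Hf r * complex_of_real (Dsg s (r \<bullet> nvec th))) \<in> borel_measurable lborel" by measurable
  show "(\<lambda>r. Hf r * complex_of_real (Dsg s (r \<bullet> nvec th) * damp (real (Suc j)) (r \<bullet> vvec th))) \<in> borel_measurable lborel" for j
    by measurable
  show "AE x in lborel. (\<lambda>j. Hf x * complex_of_real (Dsg s (x \<bullet> nvec th) * damp (real (Suc j)) (x \<bullet> vvec th))) \<longlonglongrightarrow> Hf x * complex_of_real (Dsg s (x \<bullet> nvec th))"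
  proof (rule AE_I2)
    fix x :: "real \<times> real"
    have "(\<lambda>j. Hf x * complex_of_real (Dsg s (x \<bullet> nvec th) * damp (real (Suc j)) (x \<bullet> vvec th))) \<longlonglongrightarrow> Hf x * complex_of_real (Dsg s (x \<bullet> nvec th) * 1)"
      by (intro tendsto_intros damp_lim)
    then show "(\<lambda>j. Hf x * complex_of_real (Dsg s (x \<bullet> nvec th) * damp (real (Suc j)) (x \<bullet> vvec th))) \<longlonglongrightarrow> Hf x * complex_of_real (Dsg s (x \<bullet> nvec th))"
      by simp
  qed
  show "AE x in lborel. norm (Hf x * complex_of_real (Dsg s (x \<bullet> nvec th) * damp (real (Suc j)) (x \<bullet> vvec th))) \<le> 2 * norm (Hf x)" for j
  proof (rule AE_I2)
    fix x :: "real \<times> real"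
    have "\<bar>Dsg s (x \<bullet> nvec th) * damp (real (Suc j)) (x \<bullet> vvec th)\<bar> \<le> 2 * 1"
      unfolding abs_mult using Dsg_bound damp_le1 damp_nn by (intro mult_mono) auto
    then show "norm (Hf x * complex_of_real (Dsg s (x \<bullet> nvec th) * damp (real (Suc j)) (x \<bullet> vvec th))) \<le> 2 * norm (Hf x)"
    proof -
      have "norm (Hf x * complex_of_real (Dsg s (x \<bullet> nvec th) * damp (real (Suc j)) (x \<bullet> vvec th)))
          = norm (Hf x) * \<bar>Dsg s (x \<bullet> nvec th) * damp (real (Suc j)) (x \<bullet> vvec th)\<bar>"
        by (simp only: norm_mult norm_of_real)
      also have "\<dots> \<le> norm (Hf x) * (2 * 1)" by (intro mult_left_mono) (fact, simp)
      finally show ?thesis by simp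
    qed
  qed
qed

lemma inner_ft:
  assumes m: "m > 0"
  shows "(LINT r|lborel. cis (2 * pi * (f \<bullet> r)) * complex_of_real (Dsg s (r \<bullet> nvec th) * damp m (r \<bullet> vvec th)))
     = Dh s (f \<bullet> nvec th) * complex_of_real (Psir m (f \<bullet> vvec th))"
proof -
  let ?g = "\<lambda>x. complex_of_real (Dsg s x) * cis (2 * pi * (f \<bullet> nvec th) * x)"
  let ?h = "\<lambda>y. complex_of_real (damp m y) * cis (2 * pi * (f \<bullet> vvec th) * y)"
  have "(LINT r|lborel. cis (2 * pi * (f \<bullet> r)) * complex_of_real (Dsg s (r \<bullet> nvec th) * damp m (r \<bullet> vvec th)))
      = (LINT r|lborel. ?g (r \<bullet> nvec th) * ?h (r \<bullet> vvec th))"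
  proof (intro Bochner_Integration.integral_cong refl)
    fix r :: "real \<times> real"
    have "cis (2 * pi * (f \<bullet> r)) = cis (2 * pi * (f \<bullet> nvec th) * (r \<bullet> nvec th)) * cis (2 * pi * (f \<bullet> vvec th) * (r \<bullet> vvec th))"
      by (subst inner_split[of f r th]) (simp add: cis_mult algebra_simps)
    then show "cis (2 * pi * (f \<bullet> r)) * complex_of_real (Dsg s (r \<bullet> nvec th) * damp m (r \<bullet> vvec th)) = ?g (r \<bullet> nvec th) * ?h (r \<bullet> vvec th)"
      by (simp add: algebra_simps)
  qed
  also have "\<dots> = (LINT x|lborel. ?g x) * (LINT y|lborel. ?h y)"
    by (rule rot_prod_integral[OF Dsg_cis_int damp_cis_int[OF m]])
  also have "\<dots> = Dh s (f \<bullet> nvec th) * complex_of_real (Psir m (f \<bullet> vvec th))"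
    by (simp add: Dh_def damp_ft[OF m])
  finally show ?thesis .
qed

lemma V_eq:
  assumes m: "m > 0"
  shows "V s m = (LINT f|lborel. \<i> * complex_of_real A * complex_of_real (K f) * (Dh s (f \<bullet> nvec th) * complex_of_real (Psir m (f \<bullet> vvec th))))"
proof -
  define E where "E r = Dsg s (r \<bullet> nvec th) * damp m (r \<bullet> vvec th)" for r :: "real \<times> real"
  have Em[measurable]: "E \<in> borel_measurable borel" unfolding E_def by measurable
  have Eint: "integrable lborel E"
    unfolding E_def by (rule rot_prod_integrable[OF Dsg_int damp_int[OF m]])
  define \<Phi> where "\<Phi> r f = \<i> * complex_of_real A * complex_of_real (K f) * cis (2 * pi * (f \<bullet> r)) * complex_of_real (E r)" for r f :: "real \<times> real"
  have \<Phi>int: "integrable (lborel \<Otimes>\<^sub>M lborel) (case_prod \<Phi>)"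
  proof (rule Bochner_Integration.integrable_bound)
    show "integrable (lborel \<Otimes>\<^sub>M lborel) (\<lambda>x. \<bar>E (fst x)\<bar> * (A * \<bar>K (snd x)\<bar>))"
      by (rule gprod_integrable[OF sf_lborel sf_lborel]) (use Eint K_int in auto)
    show "case_prod \<Phi> \<in> borel_measurable (lborel \<Otimes>\<^sub>M lborel)" unfolding \<Phi>_def by measurable
    show "AE x in lborel \<Otimes>\<^sub>M lborel. norm (case_prod \<Phi> x) \<le> norm (\<bar>E (fst x)\<bar> * (A * \<bar>K (snd x)\<bar>))"
      by (rule AE_I2) (use Apos in \<open>auto simp: \<Phi>_def norm_mult abs_mult\<close>)
  qed
  have "V s m = (LINT r|lborel. LINT f|lborel. \<Phi> r f)"
    unfolding V_def Hf_def2 \<Phi>_def E_def by (simp add: integral_mult_left_zero)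
  also have "\<dots> = (LINT f|lborel. LINT r|lborel. \<Phi> r f)"
    by (rule lborel_pair.Fubini_integral[OF \<Phi>int, symmetric])
  also have "\<dots> = (LINT f|lborel. \<i> * complex_of_real A * complex_of_real (K f) * (Dh s (f \<bullet> nvec th) * complex_of_real (Psir m (f \<bullet> vvec th))))"
  proof (intro Bochner_Integration.integral_cong refl)
    fix f :: "real \<times> real"
    have "(LINT r|lborel. \<Phi> r f) = \<i> * complex_of_real A * complex_of_real (K f) * (LINT r|lborel. cis (2 * pi * (f \<bullet> r)) * complex_of_real (Dsg s (r \<bullet> nvec th) * damp m (r \<bullet> vvec th)))"
      unfolding \<Phi>_def E_def by (simp add: mult.assoc)
    also have "\<dots> = \<i> * complex_of_real A * complex_of_real (K f) * (Dh s (f \<bullet> nvec th) * complex_of_real (Psir m (f \<bullet> vvec th)))"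
      by (subst inner_ft[OF m]) (rule refl)
    finally show "(LINT r|lborel. \<Phi> r f) = \<i> * complex_of_real A * complex_of_real (K f) * (Dh s (f \<bullet> nvec th) * complex_of_real (Psir m (f \<bullet> vvec th)))" .
  qed
  finally show ?thesis .
qed

definition "Iw m k = (LINT w|lborel. K (rot th (k, w)) * Psir m w)"

lemma K_rot_meas[measurable]: "(\<lambda>x. K (rot th x)) \<in> borel_measurable borel"
  by measurable

lemma Iw_meas[measurable]: "Iw m \<in> borel_measurable borel"
proof -
  have "(\<lambda>(k, w). K (rot th (k, w)) * Psir m w) \<in> borel_measurable (lborel \<Otimes>\<^sub>M lborel)"
    by measurable
  then have "(\<lambda>k. LINT w|lborel. K (rot th (k, w)) * Psir m w) \<in> borel_measurable lborel"
    by (rule lborel.borel_measurable_lebesgue_integral[where f="\<lambda>k w. K (rot th (k, w)) * Psir m w"])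
  then show ?thesis by (simp add: Iw_def[abs_def])
qed

lemma V_eq2:
  assumes m: "m > 0"
  shows "V s m = (LINT k|lborel. \<i> * complex_of_real A * Dh s k * complex_of_real (Iw m k))"
proof -
  define \<Theta> where "\<Theta> f = \<i> * complex_of_real A * complex_of_real (K f) * (Dh s (f \<bullet> nvec th) * complex_of_real (Psir m (f \<bullet> vvec th)))" for f
  have \<Theta>m[measurable]: "\<Theta> \<in> borel_measurable borel" unfolding \<Theta>_def by measurable
  define \<Xi> where "\<Xi> k w = \<i> * complex_of_real A * complex_of_real (K (rot th (k, w))) * (Dh s k * complex_of_real (Psir m w))" for k w
  have \<Xi>int: "integrable (lborel \<Otimes>\<^sub>M lborel) (case_prod \<Xi>)"
  proof (rule Bochner_Integration.integrable_bound)
    show "integrable (lborel \<Otimes>\<^sub>M lborel) (\<lambda>x. (A * KB * Ds1 s * indicator (ball (0::real) (2 * R0)) (fst x)) * Psir m (snd x))"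
      by (rule gprod_integrable[OF sf_lborel sf_lborel])
         (use emeasure_lborel_ball_finite[of "0::real" "2 * R0"] in \<open>auto intro!: integrable_mult_right integrable_real_indicator Psir_int m\<close>)
    show "case_prod \<Xi> \<in> borel_measurable (lborel \<Otimes>\<^sub>M lborel)" unfolding \<Xi>_def by measurable
    show "AE x in lborel \<Otimes>\<^sub>M lborel. norm (case_prod \<Xi> x) \<le> norm ((A * KB * Ds1 s * indicator (ball (0::real) (2 * R0)) (fst x)) * Psir m (snd x))"
    proof (rule AE_I2, clarify)
      fix k w :: real
      show "norm (\<Xi> k w) \<le> norm ((A * KB * Ds1 s * indicator (ball (0::real) (2 * R0)) (fst (k, w))) * Psir m (snd (k, w)))"
      proof (cases "\<bar>k\<bar> < 2 * R0")
        case True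
        have "norm (\<Xi> k w) = A * \<bar>K (rot th (k, w))\<bar> * (cmod (Dh s k) * Psir m w)"
          using Apos Psir_nn[OF m] by (simp add: \<Xi>_def norm_mult)
        also have "\<dots> \<le> A * KB * (Ds1 s * Psir m w)"
          using Apos Psir_nn[OF m] K_bound' Dh_bound KB_nn Ds1_nn
          by (intro mult_mono mult_left_mono) auto
        finally show ?thesis using True Apos Psir_nn[OF m] KB_nn Ds1_nn by (simp add: abs_mult mult_ac)
      next
        case False
        then show ?thesis using K_rot_zero[of k w] by (simp add: \<Xi>_def)
      qed
    qed
  qed
  have "V s m = (LINT f|lborel. \<Theta> f)" unfolding V_eq[OF m] \<Theta>_def ..
  also have "\<dots> = (LINT x|lborel. \<Theta> (rot th x))" by (rule integral_rot[symmetric]) simp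
  also have "\<dots> = (LINT x|(lborel \<Otimes>\<^sub>M lborel). case_prod \<Xi> x)"
    by (simp add: lborel_prod \<Theta>_def \<Xi>_def rot_inner_n rot_inner_v case_prod_beta')
  also have "\<dots> = (LINT k|lborel. LINT w|lborel. \<Xi> k w)"
    by (rule lborel_pair.integral_fst[OF \<Xi>int, symmetric])
  also have "\<dots> = (LINT k|lborel. \<i> * complex_of_real A * Dh s k * complex_of_real (Iw m k))"
  proof (intro Bochner_Integration.integral_cong refl)
    fix k :: real
    have "(LINT w|lborel. \<Xi> k w) = \<i> * complex_of_real A * Dh s k * (LINT w|lborel. complex_of_real (K (rot th (k, w)) * Psir m w))"
      unfolding \<Xi>_def by (simp add: mult_ac)
    then show "(LINT w|lborel. \<Xi> k w) = \<i> * complex_of_real A * Dh s k * complex_of_real (Iw m k)"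
      unfolding Iw_def integral_complex_of_real .
  qed
  finally show ?thesis .
qed

lemma Iw_subst:
  assumes m: "m > 0"
  shows "Iw m k = (LINT t|lborel. K (rot th (k, t / (2 * pi * m))) * std_normal_density t)"
proof -
  have "Iw m k = \<bar>1 / (2 * pi * m)\<bar> *\<^sub>R (LINT t|lborel. K (rot th (k, 0 + 1 / (2 * pi * m) * t)) * Psir m (0 + 1 / (2 * pi * m) * t))"
    unfolding Iw_def by (rule lborel_integral_real_affine) (use m in simp)
  also have "(\<lambda>t. K (rot th (k, 0 + 1 / (2 * pi * m) * t)) * Psir m (0 + 1 / (2 * pi * m) * t)) = (\<lambda>t. (2 * pi * m) * (K (rot th (k, t / (2 * pi * m))) * std_normal_density t))"
    using m by (auto simp: Psir_def)
  finally show ?thesis using m by simp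
qed

lemma Kphi_bound: "norm (K x * std_normal_density t) \<le> KB * std_normal_density t"
proof -
  have "norm (K x * std_normal_density t) = \<bar>K x\<bar> * std_normal_density t"
    by (simp add: abs_mult normal_density_nonneg)
  also have "\<dots> \<le> KB * std_normal_density t"
    by (intro mult_right_mono K_bound' normal_density_nonneg)
  finally show ?thesis .
qed

lemma Iw_int: "integrable lborel (\<lambda>t. K (rot th (k, c * t)) * std_normal_density t)"
proof (rule Bochner_Integration.integrable_bound[OF integrable_mult_right[OF std_normal_integrable_real, of KB]])
  show "(\<lambda>t. K (rot th (k, c * t)) * std_normal_density t) \<in> borel_measurable lborel" by measurable
  show "AE x in lborel. norm (K (rot th (k, c * x)) * std_normal_density x) \<le> norm (KB * std_normal_density x)"
    by (rule AE_I2) (use Kphi_bound KB_nn in \<open>simp add: abs_mult normal_density_nonneg\<close>)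
qed

lemma Iw_bound:
  assumes m: "m > 0"
  shows "\<bar>Iw m k\<bar> \<le> KB"
proof -
  have "\<bar>Iw m k\<bar> \<le> (LINT t|lborel. norm (K (rot th (k, t / (2 * pi * m))) * std_normal_density t))"
    unfolding Iw_subst[OF m] using integral_norm_bound[of lborel "\<lambda>t. K (rot th (k, t / (2 * pi * m))) * std_normal_density t"] by simp
  also have "\<dots> \<le> (LINT t|lborel. KB * std_normal_density t)"
  proof (rule Bochner_Integration.integral_mono)
    show "integrable lborel (\<lambda>t. norm (K (rot th (k, t / (2 * pi * m))) * std_normal_density t))"
      using Iw_int[of k "1 / (2 * pi * m)"] by simp
    show "integrable lborel (\<lambda>t. KB * std_normal_density t)"
      by (intro integrable_mult_right std_normal_integrable_real)
    show "norm (K (rot th (k, t / (2 * pi * m))) * std_normal_density t) \<le> KB * std_normal_density t" for t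
      by (rule Kphi_bound)
  qed
  also have "\<dots> = KB" by (simp add: std_normal_integral_real)
  finally show ?thesis .
qed

lemma Iw_zero: "\<bar>k\<bar> \<ge> 2 * R0 \<Longrightarrow> Iw m k = 0"
  by (simp add: Iw_def K_rot_zero)

lemma Iw_lim: "(\<lambda>j. Iw (real (Suc j)) k) \<longlonglongrightarrow> K (k *\<^sub>R nvec th)"
proof -
  have "(\<lambda>j. LINT t|lborel. K (rot th (k, t / (2 * pi * real (Suc j)))) * std_normal_density t) \<longlonglongrightarrow> (LINT t|lborel. K (rot th (k, 0)) * std_normal_density t)"
  proof (rule integral_dominated_convergence[where w="\<lambda>t. KB * std_normal_density t"])
    show "integrable lborel (\<lambda>t. KB * std_normal_density t)"
      by (intro integrable_mult_right std_normal_integrable_real)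
    show "(\<lambda>t. K (rot th (k, 0)) * std_normal_density t) \<in> borel_measurable lborel" by measurable
    show "(\<lambda>t. K (rot th (k, t / (2 * pi * real (Suc j)))) * std_normal_density t) \<in> borel_measurable lborel" for j
      by measurable
    show "AE t in lborel. (\<lambda>j. K (rot th (k, t / (2 * pi * real (Suc j)))) * std_normal_density t) \<longlonglongrightarrow> K (rot th (k, 0)) * std_normal_density t"
    proof (rule AE_I2)
      fix t :: real
      have z: "(\<lambda>j. t / (2 * pi * real (Suc j))) \<longlonglongrightarrow> 0"
      proof -
        have "(\<lambda>j. (t / (2 * pi)) * inverse (real (Suc j))) \<longlonglongrightarrow> (t / (2 * pi)) * 0"
          by (intro tendsto_intros LIMSEQ_inverse_real_of_nat)
        then show ?thesis by (simp add: field_simps)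
      qed
      have rc: "isCont (rot th) x" for x
        by (metis continuous_on_eq_continuous_at open_UNIV rot_continuous UNIV_I)
      have "(\<lambda>j. (k, t / (2 * pi * real (Suc j)))) \<longlonglongrightarrow> (k, 0)"
        by (intro tendsto_Pair tendsto_const z)
      then have "(\<lambda>j. rot th (k, t / (2 * pi * real (Suc j)))) \<longlonglongrightarrow> rot th (k, 0)"
        by (rule isCont_tendsto_compose[OF rc])
      then have "(\<lambda>j. K (rot th (k, t / (2 * pi * real (Suc j))))) \<longlonglongrightarrow> K (rot th (k, 0))"
        by (rule isCont_tendsto_compose[OF K_cont])
      then show "(\<lambda>j. K (rot th (k, t / (2 * pi * real (Suc j)))) * std_normal_density t) \<longlonglongrightarrow> K (rot th (k, 0)) * std_normal_density t"
        by (intro tendsto_intros)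
    qed
    show "AE t in lborel. norm (K (rot th (k, t / (2 * pi * real (Suc j)))) * std_normal_density t) \<le> KB * std_normal_density t" for j
      by (rule AE_I2) (rule Kphi_bound)
  qed
  then show ?thesis
    by (simp add: Iw_subst std_normal_integral_real rot_k0)
qed

lemma G_formula: "G s - G 0 = (LINT k|lborel. \<i> * complex_of_real A * Dh s k * complex_of_real (K (k *\<^sub>R nvec th)))"
proof -
  have "(\<lambda>j. V s (real (Suc j))) \<longlonglongrightarrow> (LINT k|lborel. \<i> * complex_of_real A * Dh s k * complex_of_real (K (k *\<^sub>R nvec th)))"
    unfolding V_eq2[OF of_nat_0_less_iff[THEN iffD2, OF zero_less_Suc]]
  proof (rule integral_dominated_convergence[where w="\<lambda>k. A * Ds1 s * KB * indicator (ball (0::real) (2 * R0)) k"])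
    show "integrable lborel (\<lambda>k. A * Ds1 s * KB * indicator (ball (0::real) (2 * R0)) k)"
      using emeasure_lborel_ball_finite[of "0::real" "2 * R0"]
      by (intro integrable_mult_right integrable_real_indicator) auto
    show "(\<lambda>k. \<i> * complex_of_real A * Dh s k * complex_of_real (K (k *\<^sub>R nvec th))) \<in> borel_measurable lborel"
      by measurable
    show "(\<lambda>k. \<i> * complex_of_real A * Dh s k * complex_of_real (Iw (real (Suc j)) k)) \<in> borel_measurable lborel" for j
      by measurable
    show "AE k in lborel. (\<lambda>j. \<i> * complex_of_real A * Dh s k * complex_of_real (Iw (real (Suc j)) k)) \<longlonglongrightarrow> \<i> * complex_of_real A * Dh s k * complex_of_real (K (k *\<^sub>R nvec th))"
      by (rule AE_I2) (intro tendsto_intros Iw_lim)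
    show "AE k in lborel. norm (\<i> * complex_of_real A * Dh s k * complex_of_real (Iw (real (Suc j)) k)) \<le> A * Ds1 s * KB * indicator (ball (0::real) (2 * R0)) k" for j
    proof (rule AE_I2)
      fix k :: real
      show "norm (\<i> * complex_of_real A * Dh s k * complex_of_real (Iw (real (Suc j)) k)) \<le> A * Ds1 s * KB * indicator (ball (0::real) (2 * R0)) k"
      proof (cases "\<bar>k\<bar> < 2 * R0")
        case True
        have "norm (\<i> * complex_of_real A * Dh s k * complex_of_real (Iw (real (Suc j)) k)) = A * cmod (Dh s k) * \<bar>Iw (real (Suc j)) k\<bar>"
          using Apos by (simp add: norm_mult)
        also have "\<dots> \<le> A * Ds1 s * KB"
          using Apos Dh_bound Iw_bound[of "real (Suc j)" k] Ds1_nn by (intro mult_mono mult_left_mono) auto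
        finally show ?thesis using True by simp
      next
        case False
        then show ?thesis using Iw_zero[of k] by simp
      qed
    qed
  qed
  moreover have "(\<lambda>j. V s (real (Suc j))) \<longlonglongrightarrow> G s - G 0" by (rule V_lim)
  ultimately show ?thesis using LIMSEQ_unique by blast
qed

end


definition Sn :: "real \<Rightarrow> real \<Rightarrow> real" where "Sn s k = (LINT x|lborel. Dsg s x * sin (2 * pi * k * x))"

lemma Sn_int: "integrable lborel (\<lambda>x. Dsg s x * sin (2 * pi * k * x))"
  by (rule Bochner_Integration.integrable_bound[OF integrable_norm[OF Dsg_int[of s]]]) (auto simp: abs_mult intro!: mult_left_le)

lemma Dh_diff: "Dh s k - Dh s (- k) = 2 * \<i> * complex_of_real (Sn s k)"
proof -
  have "Dh s k - Dh s (- k) = (LINT x|lborel. complex_of_real (Dsg s x) * cis (2 * pi * k * x) - complex_of_real (Dsg s x) * cis (2 * pi * (- k) * x))"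
    unfolding Dh_def by (rule Bochner_Integration.integral_diff[OF Dsg_cis_int Dsg_cis_int, symmetric])
  also have "\<dots> = (LINT x|lborel. 2 * \<i> * complex_of_real (Dsg s x * sin (2 * pi * k * x)))"
  proof (intro Bochner_Integration.integral_cong refl)
    fix x
    have "cis (2 * pi * k * x) - cis (2 * pi * (- k) * x) = 2 * \<i> * complex_of_real (sin (2 * pi * k * x))"
      by (simp add: cis.ctr complex_eq_iff)
    then show "complex_of_real (Dsg s x) * cis (2 * pi * k * x) - complex_of_real (Dsg s x) * cis (2 * pi * (- k) * x) = 2 * \<i> * complex_of_real (Dsg s x * sin (2 * pi * k * x))"
      by (simp add: right_diff_distrib[symmetric] algebra_simps)
  qed
  also have "\<dots> = 2 * \<i> * complex_of_real (Sn s k)"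
    unfolding Sn_def by (simp only: integral_mult_right_zero integral_complex_of_real)
  finally show ?thesis .
qed

lemma AE_neq: "AE x in lborel. (x::real) \<noteq> s"
  by (rule AE_I'[where N="{s}"]) auto

lemma Sn_formula_pos:
  assumes s: "s > 0" and k: "k \<noteq> 0"
  shows "Sn s k = (1 - cos (2 * pi * k * s)) / (pi * k)"
proof -
  have "Sn s k = (LINT x|lborel. indicator {0..s} x *\<^sub>R (2 * sin (2 * pi * k * x)))"
    unfolding Sn_def
  proof (rule integral_cong_AE)
    show "AE x in lborel. Dsg s x * sin (2 * pi * k * x) = indicator {0..s} x *\<^sub>R (2 * sin (2 * pi * k * x))"
      using AE_neq[of s] by eventually_elim (use s in \<open>auto simp: Dsg_def sgn_real_def indicator_def\<close>)
  qed measurable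
  also have "\<dots> = (- cos (2 * pi * k * s) / (pi * k)) - (- cos (2 * pi * k * 0) / (pi * k))"
  proof (rule integral_FTC_atLeastAtMost)
    show "0 \<le> s" using s by simp
    show "continuous_on {0..s} (\<lambda>x. 2 * sin (2 * pi * k * x))" by (intro continuous_intros)
    fix x
    have "((\<lambda>x. - cos (2 * pi * k * x) / (pi * k)) has_real_derivative (2 * sin (2 * pi * k * x))) (at x within {0..s})"
      using k by (auto intro!: derivative_eq_intros simp: field_simps)
    then show "((\<lambda>x. - cos (2 * pi * k * x) / (pi * k)) has_vector_derivative (2 * sin (2 * pi * k * x))) (at x within {0..s})"
      by (simp add: has_real_derivative_iff_has_vector_derivative)
  qed
  also have "\<dots> = (1 - cos (2 * pi * k * s)) / (pi * k)" by (simp add: diff_divide_distrib)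
  finally show ?thesis .
qed

lemma Sn_formula_neg:
  assumes s: "s < 0" and k: "k \<noteq> 0"
  shows "Sn s k = (1 - cos (2 * pi * k * s)) / (pi * k)"
proof -
  have "Sn s k = (LINT x|lborel. indicator {s..0} x *\<^sub>R (- 2 * sin (2 * pi * k * x)))"
    unfolding Sn_def
  proof (rule integral_cong_AE)
    show "AE x in lborel. Dsg s x * sin (2 * pi * k * x) = indicator {s..0} x *\<^sub>R (- 2 * sin (2 * pi * k * x))"
      using AE_neq[of s] by eventually_elim (use s in \<open>auto simp: Dsg_def sgn_real_def indicator_def\<close>)
  qed measurable
  also have "\<dots> = (cos (2 * pi * k * 0) / (pi * k)) - (cos (2 * pi * k * s) / (pi * k))"
  proof (rule integral_FTC_atLeastAtMost)
    show "s \<le> 0" using s by simp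
    show "continuous_on {s..0} (\<lambda>x. - 2 * sin (2 * pi * k * x))" by (intro continuous_intros)
    fix x
    have "((\<lambda>x. cos (2 * pi * k * x) / (pi * k)) has_real_derivative (- 2 * sin (2 * pi * k * x))) (at x within {s..0})"
      using k by (auto intro!: derivative_eq_intros simp: field_simps)
    then show "((\<lambda>x. cos (2 * pi * k * x) / (pi * k)) has_vector_derivative (- 2 * sin (2 * pi * k * x))) (at x within {s..0})"
      by (simp add: has_real_derivative_iff_has_vector_derivative)
  qed
  also have "\<dots> = (1 - cos (2 * pi * k * s)) / (pi * k)" by (simp add: diff_divide_distrib)
  finally show ?thesis .
qed

lemma Sn_formula: "Sn s k = (1 - cos (2 * pi * k * s)) / (pi * k)"
proof (cases "k = 0")
  case True
  then show ?thesis by (simp add: Sn_def)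
next
  case False
  show ?thesis
  proof (cases s "0::real" rule: linorder_cases)
    case less then show ?thesis using Sn_formula_neg False by simp
  next
    case greater then show ?thesis using Sn_formula_pos False by simp
  next
    case equal then show ?thesis by (simp add: Sn_def Dsg_def)
  qed
qed

context LS begin

definition "kap k = K (k *\<^sub>R nvec th)"

lemma kap_odd: "kap (- k) = - kap k"
  unfolding kap_def using K_odd[of "k *\<^sub>R nvec th"] by simp

lemma kap_meas[measurable]: "kap \<in> borel_measurable borel"
  unfolding kap_def by measurable

lemma kap_bound: "\<bar>kap k\<bar> \<le> KB" unfolding kap_def by (rule K_bound')

lemma norm_nvec: "norm (nvec t) = 1" by (simp add: nvec_def norm_prod_def)

lemma kap_zero: "\<bar>k\<bar> \<ge> 2 * R0 \<Longrightarrow> kap k = 0"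
  unfolding kap_def by (intro K_supp) (simp add: norm_nvec)

lemma kap_sign: "k \<ge> 0 \<Longrightarrow> kap k \<le> 0" unfolding kap_def by (rule K_nonpos)
lemma kap_sign': "k \<le> 0 \<Longrightarrow> kap k \<ge> 0"
  using kap_sign[of "- k"] kap_odd[of k] by simp

lemma Dh_kap_int: "integrable lborel (\<lambda>k. Dh s (c * k) * complex_of_real (kap k))"
proof (rule iball_bounded[where M="Ds1 s * KB" and r="2 * R0"])
  show "(\<lambda>k. Dh s (c * k) * complex_of_real (kap k)) \<in> borel_measurable borel" by measurable
  show "norm (Dh s (c * k) * complex_of_real (kap k)) \<le> Ds1 s * KB" for k
    unfolding norm_mult norm_of_real using Dh_bound kap_bound Ds1_nn by (intro mult_mono) auto
  show "k \<notin> ball 0 (2 * R0) \<Longrightarrow> Dh s (c * k) * complex_of_real (kap k) = 0" for k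
    using kap_zero[of k] by simp
qed

lemma G_real1: "G s - G 0 = complex_of_real (- A * (LINT k|lborel. Sn s k * kap k))"
proof -
  define J where "J = (LINT k|lborel. Dh s k * complex_of_real (kap k))"
  have "G s - G 0 = \<i> * complex_of_real A * J"
    unfolding G_formula J_def kap_def by (simp add: mult.assoc)
  have "J = (LINT k|lborel. Dh s (0 + (- 1) * k) * complex_of_real (kap (0 + (- 1) * k)))"
    unfolding J_def using lborel_integral_real_affine[of "-1" "\<lambda>k. Dh s k * complex_of_real (kap k)" 0] by simp
  also have "\<dots> = - (LINT k|lborel. Dh s ((- 1) * k) * complex_of_real (kap k))"
    by (simp add: kap_odd)
  finally have J2: "J = - (LINT k|lborel. Dh s ((- 1) * k) * complex_of_real (kap k))" .
  have "2 * J = J - (- J)" by simp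
  also have "\<dots> = (LINT k|lborel. Dh s (1 * k) * complex_of_real (kap k)) - (LINT k|lborel. Dh s ((- 1) * k) * complex_of_real (kap k))"
    using J2 by (simp add: J_def)
  also have "\<dots> = (LINT k|lborel. Dh s (1 * k) * complex_of_real (kap k) - Dh s ((- 1) * k) * complex_of_real (kap k))"
    by (rule Bochner_Integration.integral_diff[OF Dh_kap_int Dh_kap_int, symmetric])
  also have "\<dots> = (LINT k|lborel. 2 * \<i> * complex_of_real (Sn s k * kap k))"
    by (intro Bochner_Integration.integral_cong refl) (simp add: left_diff_distrib[symmetric] Dh_diff)
  also have "\<dots> = 2 * \<i> * complex_of_real (LINT k|lborel. Sn s k * kap k)"
    by (simp only: integral_mult_right_zero integral_complex_of_real)
  finally have "J = \<i> * complex_of_real (LINT k|lborel. Sn s k * kap k)" by simp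
  moreover have "\<i> * complex_of_real A * (\<i> * complex_of_real X) = complex_of_real (- A * X)" for X
    by (simp add: algebra_simps)
  ultimately show ?thesis using \<open>G s - G 0 = \<i> * complex_of_real A * J\<close> by simp
qed

end


lemma one_minus_cos_le: "1 - cos (a::real) \<le> a\<^sup>2 / 2"
proof -
  have "cos a = cos (2 * (a / 2))" by simp
  also have "\<dots> = 1 - 2 * (sin (a / 2))\<^sup>2" by (rule cos_double_sin)
  finally have "1 - cos a = 2 * (sin (a / 2))\<^sup>2" by simp
  also have "(sin (a / 2))\<^sup>2 \<le> (a / 2)\<^sup>2"
    using abs_sin_x_le_abs_x[of "a / 2"] by (metis abs_ge_zero power2_abs power_mono)
  finally show ?thesis by (simp add: power_divide)
qed

context LS begin

definition "Phi k = - A * kap k / (pi * k)"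
definition "cr s = (LINT k|lborel. Phi k * (1 - cos (2 * pi * k * s)))"

lemma Phi_nn: "Phi k \<ge> 0"
proof (cases k "0::real" rule: linorder_cases)
  case less
  then have "kap k \<ge> 0" by (intro kap_sign') simp
  have "A * kap k / (pi * k) \<le> 0"
    using less Apos \<open>kap k \<ge> 0\<close> by (intro divide_nonneg_neg mult_nonneg_nonneg) (auto intro: mult_pos_neg)
  then show ?thesis by (simp add: Phi_def)
next
  case greater
  then have "kap k \<le> 0" by (intro kap_sign) simp
  have "A * kap k / (pi * k) \<le> 0"
    using greater Apos \<open>kap k \<le> 0\<close> by (intro divide_nonpos_pos mult_nonneg_nonpos) auto
  then show ?thesis by (simp add: Phi_def)
qed (simp add: Phi_def)

lemma Phi_meas[measurable]: "Phi \<in> borel_measurable borel"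
  unfolding Phi_def by measurable

lemma Phi_bound: "\<bar>k\<bar> \<ge> \<delta> \<Longrightarrow> \<delta> > 0 \<Longrightarrow> Phi k \<le> A * KB / (pi * \<delta>)"
proof -
  assume k: "\<bar>k\<bar> \<ge> \<delta>" and d: "\<delta> > 0"
  have "Phi k = \<bar>Phi k\<bar>" using Phi_nn by simp
  also have "\<dots> = A * \<bar>kap k\<bar> / (pi * \<bar>k\<bar>)" using Apos by (simp add: Phi_def abs_mult)
  also have "\<dots> \<le> A * KB / (pi * \<delta>)"
    using k d Apos kap_bound KB_nn by (intro frac_le mult_left_mono mult_pos_pos) auto
  finally show ?thesis .
qed

lemma Phi_zero: "\<bar>k\<bar> \<ge> 2 * R0 \<Longrightarrow> Phi k = 0"
  by (simp add: Phi_def kap_zero)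

lemma Sn_bound: "\<bar>Sn s k\<bar> \<le> Ds1 s"
proof -
  have "\<bar>Sn s k\<bar> \<le> (LINT x|lborel. norm (Dsg s x * sin (2 * pi * k * x)))"
    unfolding Sn_def using integral_norm_bound[of lborel "\<lambda>x. Dsg s x * sin (2 * pi * k * x)"] by simp
  also have "\<dots> \<le> Ds1 s"
    unfolding Ds1_def
    by (intro Bochner_Integration.integral_mono Sn_int[THEN integrable_norm] integrable_abs[OF Dsg_int])
       (auto simp: abs_mult intro!: mult_left_le)
  finally show ?thesis .
qed

lemma Phi_eq: "- A * (Sn s k * kap k) = Phi k * (1 - cos (2 * pi * k * s))"
  by (simp add: Phi_def Sn_formula)

lemma cr_integrand_int: "integrable lborel (\<lambda>k. Phi k * (1 - cos (2 * pi * k * s)))"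
proof -
  have "integrable lborel (\<lambda>k. - A * (Sn s k * kap k))"
  proof (rule iball_bounded[where M="A * (Ds1 s * KB)" and r="2 * R0"])
    show "(\<lambda>k. - A * (Sn s k * kap k)) \<in> borel_measurable borel"
      unfolding Phi_eq by measurable
    show "norm (- A * (Sn s k * kap k)) \<le> A * (Ds1 s * KB)" for k
      using Apos Sn_bound kap_bound Ds1_nn by (auto simp: abs_mult intro!: mult_left_mono mult_mono)
    show "k \<notin> ball 0 (2 * R0) \<Longrightarrow> - A * (Sn s k * kap k) = 0" for k
      using kap_zero[of k] by simp
  qed
  then show ?thesis unfolding Phi_eq .
qed

lemma G_cr: "G s - G 0 = complex_of_real (cr s)"
  unfolding G_real1 cr_def Phi_eq[symmetric] by simp

lemma cr_nn: "cr s \<ge> 0"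
  unfolding cr_def by (intro integral_nonneg_AE AE_I2 mult_nonneg_nonneg Phi_nn) auto

lemma G_lim: "(G \<longlongrightarrow> 0) at_top"
proof -
  have "((\<lambda>s. LINT r|lborel. Hf r * complex_of_real (sgn (s - r \<bullet> nvec th))) \<longlongrightarrow> (LINT r|lborel. Hf r)) at_top"
  proof (rule integral_dominated_convergence_at_top[where w="\<lambda>r. norm (Hf r)"])
    show "Hf \<in> borel_measurable lborel" by simp
    show "(\<lambda>r. Hf r * complex_of_real (sgn (s - r \<bullet> nvec th))) \<in> borel_measurable lborel" for s
      by measurable
    show "integrable lborel (\<lambda>r. norm (Hf r))" using Hf_int by simp
    show "AE x in lborel. ((\<lambda>s. Hf x * complex_of_real (sgn (s - x \<bullet> nvec th))) \<longlongrightarrow> Hf x) at_top"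
    proof (rule AE_I2)
      fix x :: "real \<times> real"
      have "eventually (\<lambda>s. Hf x * complex_of_real (sgn (s - x \<bullet> nvec th)) = Hf x) at_top"
        using eventually_gt_at_top[of "x \<bullet> nvec th"] by eventually_elim simp
      then show "((\<lambda>s. Hf x * complex_of_real (sgn (s - x \<bullet> nvec th))) \<longlongrightarrow> Hf x) at_top"
        by (rule tendsto_eventually)
    qed
    show "\<forall>\<^sub>F s in at_top. AE x in lborel. norm (Hf x * complex_of_real (sgn (s - x \<bullet> nvec th))) \<le> norm (Hf x)"
      by (intro always_eventually allI AE_I2) (auto simp: norm_mult sgn_real_def)
  qed
  then show ?thesis unfolding G_def[abs_def] Hf_integral0 .
qed

definition "L = - Re (G 0)"

lemma G0_real: "G 0 = complex_of_real (- L)"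
proof -
  have h1: "((\<lambda>s. Im (G s)) \<longlongrightarrow> 0) at_top" using tendsto_Im[OF G_lim] by simp
  have h2: "Im (G s) = Im (G 0)" for s
  proof -
    have "Im (G s) - Im (G 0) = Im (G s - G 0)" by simp
    also have "\<dots> = 0" unfolding G_cr by simp
    finally show ?thesis by simp
  qed
  have h2': "(\<lambda>s. Im (G s)) = (\<lambda>s::real. Im (G 0))" by (rule ext) (rule h2)
  have "((\<lambda>s::real. Im (G 0)) \<longlongrightarrow> 0) at_top" using h1 unfolding h2' .
  then have "Im (G 0) = 0" by (simp add: tendsto_const_iff)
  then show ?thesis by (simp add: L_def complex_eq_iff)
qed

lemma cr_lim: "(cr \<longlongrightarrow> L) at_top"
proof -
  have "((\<lambda>s. Re (G s) - Re (G 0)) \<longlongrightarrow> Re 0 - Re (G 0)) at_top" by (intro tendsto_intros G_lim)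
  moreover have "Re (G s) - Re (G 0) = cr s" for s
  proof -
    have "Re (G s) - Re (G 0) = Re (G s - G 0)" by simp
    also have "\<dots> = cr s" unfolding G_cr by simp
    finally show ?thesis .
  qed
  ultimately show ?thesis by (simp add: L_def)
qed

lemma L_nn: "L \<ge> 0"
  using cr_lim cr_nn by (intro tendsto_lowerbound[OF cr_lim]) (auto intro: always_eventually)

end


lemma abs_mul_le2:
  fixes p c :: real assumes "0 \<le> p" "\<bar>c\<bar> \<le> 2" shows "\<bar>p * c\<bar> \<le> 2 * p"
proof -
  have "\<bar>p * c\<bar> = p * \<bar>c\<bar>" using assms by (simp add: abs_mult)
  also have "\<dots> \<le> p * 2" by (rule mult_left_mono) (use assms in auto)
  finally show ?thesis by simp
qed

lemma int_ind_Icc: "(a::real) \<le> b \<Longrightarrow> (LINT x|lborel. indicator {a..b} x * c) = c * (b - a)"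
proof -
  assume ab: "a \<le> b"
  have "(LINT x|lborel. indicator {a..b} x * c) = (LINT x|lborel. indicator {a..b} x) * c"
    by (rule integral_mult_left_zero)
  also have "(LINT x|lborel. indicator {a..b} x) = measure lborel {a..b}"
    by (simp add: Bochner_Integration.integral_indicator)
  also have "\<dots> = b - a" using ab by (simp add: measure_def)
  finally show ?thesis by simp
qed

lemma cos_int_Icc:
  assumes m: "m > 0" and k: "k \<noteq> 0"
  shows "(LINT s|lborel. indicator {m..2 * m} s *\<^sub>R (1 - cos (2 * pi * k * s))) = m - (sin (2 * pi * k * (2 * m)) - sin (2 * pi * k * m)) / (2 * pi * k)"
proof -
  have "(LINT s|lborel. indicator {m..2 * m} s *\<^sub>R (1 - cos (2 * pi * k * s))) =
     (2 * m - sin (2 * pi * k * (2 * m)) / (2 * pi * k)) - (m - sin (2 * pi * k * m) / (2 * pi * k))"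
  proof (rule integral_FTC_atLeastAtMost)
    show "m \<le> 2 * m" using m by simp
    show "continuous_on {m..2 * m} (\<lambda>s. 1 - cos (2 * pi * k * s))" by (intro continuous_intros)
    fix x
    have "((\<lambda>s. s - sin (2 * pi * k * s) / (2 * pi * k)) has_real_derivative (1 - cos (2 * pi * k * x))) (at x within {m..2 * m})"
      using k by (auto intro!: derivative_eq_intros simp: field_simps)
    then show "((\<lambda>s. s - sin (2 * pi * k * s) / (2 * pi * k)) has_vector_derivative (1 - cos (2 * pi * k * x))) (at x within {m..2 * m})"
      by (simp add: has_real_derivative_iff_has_vector_derivative)
  qed
  also have "\<dots> = m - (sin (2 * pi * k * (2 * m)) - sin (2 * pi * k * m)) / (2 * pi * k)"
    by (simp add: diff_divide_distrib)
  finally show ?thesis .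
qed

lemma cos_int_lower:
  assumes m: "m > 0" and k: "\<bar>k\<bar> > \<delta>" and d: "\<delta> > 0"
  shows "(LINT s|lborel. indicator {m..2 * m} s *\<^sub>R (1 - cos (2 * pi * k * s))) \<ge> m - 1 / (pi * \<delta>)"
proof -
  have k0: "k \<noteq> 0" using k d by auto
  define X where "X = sin (2 * pi * k * (2 * m)) - sin (2 * pi * k * m)"
  have X2: "\<bar>X\<bar> \<le> 2"
    using abs_sin_le_one[of "2 * pi * k * (2 * m)"] abs_sin_le_one[of "2 * pi * k * m"] unfolding X_def by linarith
  have "\<bar>X / (2 * pi * k)\<bar> = \<bar>X\<bar> / (2 * pi * \<bar>k\<bar>)"
    by (simp add: abs_divide abs_mult)
  also have "\<dots> \<le> 2 / (2 * pi * \<bar>k\<bar>)"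
    by (rule divide_right_mono[OF X2]) simp
  also have "\<dots> = 1 / (pi * \<bar>k\<bar>)" by simp
  also have "\<dots> \<le> 1 / (pi * \<delta>)"
    using k d by (simp add: frac_le)
  finally have "\<bar>X / (2 * pi * k)\<bar> \<le> 1 / (pi * \<delta>)" .
  then show ?thesis unfolding cos_int_Icc[OF m k0] X_def[symmetric] by linarith
qed

context LS begin

definition "Pd \<delta> k = Phi k * indicator {k. \<delta> < \<bar>k\<bar>} k"

lemma Pd_meas[measurable]: "Pd \<delta> \<in> borel_measurable borel"
  unfolding Pd_def by measurable

lemma Pd_nn: "Pd \<delta> k \<ge> 0" by (simp add: Pd_def Phi_nn)

lemma Pd_le: "Pd \<delta> k \<le> Phi k" by (simp add: Pd_def Phi_nn indicator_def)

lemma Pd_int: "\<delta> > 0 \<Longrightarrow> integrable lborel (Pd \<delta>)"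
proof -
  assume d: "\<delta> > 0"
  show ?thesis
  proof (rule iball_bounded[where M="A * KB / (pi * \<delta>)" and r="2 * R0"])
    show "Pd \<delta> \<in> borel_measurable borel" by simp
    show "norm (Pd \<delta> k) \<le> A * KB / (pi * \<delta>)" for k
      using Phi_bound[of \<delta> k] d Pd_nn[of \<delta> k] Apos KB_nn
      by (auto simp: Pd_def indicator_def intro: divide_nonneg_pos)
    show "k \<notin> ball 0 (2 * R0) \<Longrightarrow> Pd \<delta> k = 0" for k
      using Phi_zero[of k] by (simp add: Pd_def)
  qed
qed

definition "cd \<delta> s = (LINT k|lborel. Pd \<delta> k * (1 - cos (2 * pi * k * s)))"

lemma cd_integrand_int:
  assumes d: "\<delta> > 0" shows "integrable lborel (\<lambda>k. Pd \<delta> k * (1 - cos (2 * pi * k * s)))"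
proof (rule Bochner_Integration.integrable_bound[OF integrable_mult_right[OF Pd_int[OF d], of 2]])
  show "(\<lambda>k. Pd \<delta> k * (1 - cos (2 * pi * k * s))) \<in> borel_measurable lborel" by measurable
  show "AE x in lborel. norm (Pd \<delta> x * (1 - cos (2 * pi * x * s))) \<le> norm (2 * Pd \<delta> x)"
  proof (rule AE_I2)
    fix k :: real
    have "\<bar>1 - cos (2 * pi * k * s)\<bar> \<le> 2" using abs_cos_le_one[of "2 * pi * k * s"] by linarith
    then have "\<bar>Pd \<delta> k * (1 - cos (2 * pi * k * s))\<bar> \<le> 2 * Pd \<delta> k"
      by (rule abs_mul_le2[OF Pd_nn])
    then show "norm (Pd \<delta> k * (1 - cos (2 * pi * k * s))) \<le> norm (2 * Pd \<delta> k)"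
      using Pd_nn[of \<delta> k] by simp
  qed
qed

lemma cd_le_cr: "\<delta> > 0 \<Longrightarrow> cd \<delta> s \<le> cr s"
  unfolding cd_def cr_def
  by (intro Bochner_Integration.integral_mono cd_integrand_int cr_integrand_int mult_right_mono Pd_le)
     (use cos_le_one in auto)

lemma cd_meas[measurable]: "cd \<delta> \<in> borel_measurable borel"
proof -
  have "(\<lambda>(s, k). Pd \<delta> k * (1 - cos (2 * pi * k * s))) \<in> borel_measurable (lborel \<Otimes>\<^sub>M lborel)"
    by measurable
  then have "(\<lambda>s. LINT k|lborel. Pd \<delta> k * (1 - cos (2 * pi * k * s))) \<in> borel_measurable lborel"
    by (rule lborel.borel_measurable_lebesgue_integral[where f="\<lambda>s k. Pd \<delta> k * (1 - cos (2 * pi * k * s))"])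
  then show ?thesis by (simp add: cd_def[abs_def])
qed

lemma cd_fubini:
  assumes d: "\<delta> > 0" and m: "m > 0"
  shows "(LINT s|lborel. indicator {m..2 * m} s * cd \<delta> s) =
     (LINT k|lborel. Pd \<delta> k * (LINT s|lborel. indicator {m..2 * m} s *\<^sub>R (1 - cos (2 * pi * k * s))))"
proof -
  define F where "F s k = indicator {m..2 * m} s * (Pd \<delta> k * (1 - cos (2 * pi * k * s)))" for s k :: real
  have Fint: "integrable (lborel \<Otimes>\<^sub>M lborel) (case_prod F)"
  proof (rule Bochner_Integration.integrable_bound)
    show "integrable (lborel \<Otimes>\<^sub>M lborel) (\<lambda>x. indicator {m..2 * m} (fst x) * (2 * Pd \<delta> (snd x)))"
      by (rule gprod_integrable[OF sf_lborel sf_lborel])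
         (auto intro!: integrable_mult_right Pd_int d integrable_real_indicator simp: emeasure_lborel_Icc_eq)
    show "case_prod F \<in> borel_measurable (lborel \<Otimes>\<^sub>M lborel)" unfolding F_def by measurable
    show "AE x in lborel \<Otimes>\<^sub>M lborel. norm (case_prod F x) \<le> norm (indicator {m..2 * m} (fst x) * (2 * Pd \<delta> (snd x)))"
    proof (rule AE_I2, clarify)
      fix s k :: real
      have "\<bar>1 - cos (2 * pi * k * s)\<bar> \<le> 2" using abs_cos_le_one[of "2 * pi * k * s"] by linarith
      then have "\<bar>Pd \<delta> k * (1 - cos (2 * pi * k * s))\<bar> \<le> 2 * Pd \<delta> k"
        by (rule abs_mul_le2[OF Pd_nn])
      then show "norm (F s k) \<le> norm (indicator {m..2 * m} (fst (s, k)) * (2 * Pd \<delta> (snd (s, k))))"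
        using Pd_nn[of \<delta> k] by (simp add: F_def indicator_def abs_mult)
    qed
  qed
  have "(LINT s|lborel. indicator {m..2 * m} s * cd \<delta> s) = (LINT s|lborel. LINT k|lborel. F s k)"
    unfolding cd_def F_def by simp
  also have "\<dots> = (LINT k|lborel. LINT s|lborel. F s k)"
    by (rule lborel_pair.Fubini_integral[OF Fint, symmetric])
  also have "\<dots> = (LINT k|lborel. Pd \<delta> k * (LINT s|lborel. indicator {m..2 * m} s *\<^sub>R (1 - cos (2 * pi * k * s))))"
  proof (intro Bochner_Integration.integral_cong refl)
    fix k :: real
    have "(LINT s|lborel. F s k) = (LINT s|lborel. Pd \<delta> k * (indicator {m..2 * m} s *\<^sub>R (1 - cos (2 * pi * k * s))))"
      unfolding F_def by (intro Bochner_Integration.integral_cong refl) simp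
    then show "(LINT s|lborel. F s k) = Pd \<delta> k * (LINT s|lborel. indicator {m..2 * m} s *\<^sub>R (1 - cos (2 * pi * k * s)))"
      by simp
  qed
  finally show ?thesis .
qed

definition "Rm m k = m - (sin (2 * pi * k * (2 * m)) - sin (2 * pi * k * m)) / (2 * pi * k)"

lemma Rm_meas[measurable]: "Rm m \<in> borel_measurable borel"
  unfolding Rm_def by measurable

lemma Pd_Q: "m > 0 \<Longrightarrow> Pd \<delta> k * (LINT s|lborel. indicator {m..2 * m} s *\<^sub>R (1 - cos (2 * pi * k * s))) = Pd \<delta> k * Rm m k"
proof (cases "k = 0")
  case True
  then show ?thesis by (simp add: Pd_def Phi_def)
next
  case False
  assume m: "m > 0"
  show ?thesis by (simp only: cos_int_Icc[OF m False] Rm_def)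
qed

lemma Pd_Rm_int:
  assumes d: "\<delta> > 0" and m: "m > 0"
  shows "integrable lborel (\<lambda>k. Pd \<delta> k * Rm m k)"
proof (rule Bochner_Integration.integrable_bound[OF integrable_mult_right[OF Pd_int[OF d], of "m + 1 / (pi * \<delta>)"]])
  show "(\<lambda>k. Pd \<delta> k * Rm m k) \<in> borel_measurable lborel" by measurable
  show "AE x in lborel. norm (Pd \<delta> x * Rm m x) \<le> norm ((m + 1 / (pi * \<delta>)) * Pd \<delta> x)"
  proof (rule AE_I2)
    fix k :: real
    show "norm (Pd \<delta> k * Rm m k) \<le> norm ((m + 1 / (pi * \<delta>)) * Pd \<delta> k)"
    proof (cases "\<delta> < \<bar>k\<bar>")
      case True
      have k0: "k \<noteq> 0" using True d by auto
      define X where "X = sin (2 * pi * k * (2 * m)) - sin (2 * pi * k * m)"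
      have X2: "\<bar>X\<bar> \<le> 2"
        using abs_sin_le_one[of "2 * pi * k * (2 * m)"] abs_sin_le_one[of "2 * pi * k * m"] unfolding X_def by linarith
      have "\<bar>X / (2 * pi * k)\<bar> = \<bar>X\<bar> / (2 * pi * \<bar>k\<bar>)"
        by (simp add: abs_divide abs_mult)
      also have "\<dots> \<le> 2 / (2 * pi * \<bar>k\<bar>)"
        by (rule divide_right_mono[OF X2]) simp
      also have "\<dots> = 1 / (pi * \<bar>k\<bar>)" by simp
      also have "\<dots> \<le> 1 / (pi * \<delta>)" using True d by (simp add: frac_le)
      finally have "\<bar>X / (2 * pi * k)\<bar> \<le> 1 / (pi * \<delta>)" .
      then have "\<bar>Rm m k\<bar> \<le> m + 1 / (pi * \<delta>)" unfolding Rm_def X_def[symmetric] using m by linarith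
      then have "\<bar>Pd \<delta> k * Rm m k\<bar> \<le> Pd \<delta> k * (m + 1 / (pi * \<delta>))"
        using Pd_nn[of \<delta> k] by (simp add: abs_mult mult_left_mono)
      also have "\<dots> \<le> \<bar>(m + 1 / (pi * \<delta>)) * Pd \<delta> k\<bar>" by (simp add: mult.commute)
      finally show ?thesis by simp
    next
      case False
      then show ?thesis by (simp add: Pd_def)
    qed
  qed
qed

lemma cd_bound: "\<delta> > 0 \<Longrightarrow> \<bar>cd \<delta> s\<bar> \<le> 2 * (LINT k|lborel. Pd \<delta> k)"
proof -
  assume d: "\<delta> > 0"
  have "\<bar>cd \<delta> s\<bar> \<le> (LINT k|lborel. norm (Pd \<delta> k * (1 - cos (2 * pi * k * s))))"
    unfolding cd_def using integral_norm_bound[of lborel "\<lambda>k. Pd \<delta> k * (1 - cos (2 * pi * k * s))"] by simp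
  also have "\<dots> \<le> (LINT k|lborel. 2 * Pd \<delta> k)"
  proof (rule Bochner_Integration.integral_mono)
    show "integrable lborel (\<lambda>k. norm (Pd \<delta> k * (1 - cos (2 * pi * k * s))))"
      using cd_integrand_int[OF d] by simp
    show "integrable lborel (\<lambda>k. 2 * Pd \<delta> k)" using Pd_int[OF d] by simp
    fix k :: real
    have "\<bar>1 - cos (2 * pi * k * s)\<bar> \<le> 2" using abs_cos_le_one[of "2 * pi * k * s"] by linarith
    then show "norm (Pd \<delta> k * (1 - cos (2 * pi * k * s))) \<le> 2 * Pd \<delta> k"
      using abs_mul_le2[OF Pd_nn] by simp
  qed
  also have "\<dots> = 2 * (LINT k|lborel. Pd \<delta> k)" by simp
  finally show ?thesis .
qed

lemma tail_le:
  assumes d: "\<delta> > 0"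
  shows "(LINT k|lborel. Pd \<delta> k) \<le> L"
proof (rule ccontr)
  define P where "P = (LINT k|lborel. Pd \<delta> k)"
  assume "\<not> P \<le> L"
  then have PL: "P > L" unfolding P_def by simp
  have P0: "P \<ge> 0" unfolding P_def by (intro integral_nonneg_AE AE_I2 Pd_nn)
  define \<epsilon> where "\<epsilon> = (P - L) / 2"
  have e0: "\<epsilon> > 0" using PL by (simp add: \<epsilon>_def)
  have "eventually (\<lambda>s. cr s < L + \<epsilon>) at_top"
    using order_tendstoD(2)[OF cr_lim, of "L + \<epsilon>"] e0 by simp
  then obtain S where S: "\<And>s. s \<ge> S \<Longrightarrow> cr s < L + \<epsilon>" by (auto simp: eventually_at_top_linorder)
  have key: "(m - 1 / (pi * \<delta>)) * P \<le> (L + \<epsilon>) * m" if m: "m \<ge> S" "m > 0" for m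
  proof -
    have "(m - 1 / (pi * \<delta>)) * P = (LINT k|lborel. Pd \<delta> k * (m - 1 / (pi * \<delta>)))"
      unfolding P_def by simp
    also have "\<dots> \<le> (LINT k|lborel. Pd \<delta> k * Rm m k)"
    proof (rule Bochner_Integration.integral_mono)
      show "integrable lborel (\<lambda>k. Pd \<delta> k * (m - 1 / (pi * \<delta>)))" using Pd_int[OF d] by simp
      show "integrable lborel (\<lambda>k. Pd \<delta> k * Rm m k)" by (rule Pd_Rm_int[OF d m(2)])
      fix k :: real
      show "Pd \<delta> k * (m - 1 / (pi * \<delta>)) \<le> Pd \<delta> k * Rm m k"
      proof (cases "\<delta> < \<bar>k\<bar>")
        case True
        have k0: "k \<noteq> 0" using True d by auto
        have "m - 1 / (pi * \<delta>) \<le> Rm m k"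
          using cos_int_lower[OF m(2) True d] unfolding cos_int_Icc[OF m(2) k0] Rm_def .
        then show ?thesis using Pd_nn[of \<delta> k] by (rule mult_left_mono)
      next
        case False
        then show ?thesis by (simp add: Pd_def)
      qed
    qed
    also have "\<dots> = (LINT s|lborel. indicator {m..2 * m} s * cd \<delta> s)"
      unfolding cd_fubini[OF d m(2)] Pd_Q[OF m(2)] ..
    also have "\<dots> \<le> (LINT s|lborel. indicator {m..2 * m} s * (L + \<epsilon>))"
    proof (rule Bochner_Integration.integral_mono)
      show "integrable lborel (\<lambda>s. indicator {m..2 * m} s * cd \<delta> s)"
      proof (rule Bochner_Integration.integrable_bound)
        show "integrable lborel (\<lambda>s. indicator {m..2 * m} s * (2 * P))"
          using m by (intro integrable_mult_left integrable_real_indicator) (auto simp: emeasure_lborel_Icc_eq)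
        show "(\<lambda>s. indicator {m..2 * m} s * cd \<delta> s) \<in> borel_measurable lborel" by measurable
        show "AE x in lborel. norm (indicator {m..2 * m} x * cd \<delta> x) \<le> norm (indicator {m..2 * m} x * (2 * P))"
          by (rule AE_I2) (use cd_bound[OF d] P0 in \<open>auto simp: indicator_def P_def\<close>)
      qed
      show "integrable lborel (\<lambda>s. indicator {m..2 * m} s * (L + \<epsilon>))"
        using m by (intro integrable_mult_left integrable_real_indicator) (auto simp: emeasure_lborel_Icc_eq)
      fix s :: real
      show "indicator {m..2 * m} s * cd \<delta> s \<le> indicator {m..2 * m} s * (L + \<epsilon>)"
      proof (cases "s \<in> {m..2 * m}")
        case True
        then have "cd \<delta> s \<le> L + \<epsilon>" using cd_le_cr[OF d, of s] S[of s] m by auto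
        then show ?thesis using True by simp
      qed simp
    qed
    also have "\<dots> = (L + \<epsilon>) * m" using m by (simp add: int_ind_Icc)
    finally show ?thesis .
  qed
  define m where "m = max (max S 1) (2 * P / (pi * \<delta> * (P - L)) + 1)"
  have m1: "m \<ge> S" "m > 0" unfolding m_def by auto
  have "(m - 1 / (pi * \<delta>)) * P \<le> (L + \<epsilon>) * m" by (rule key[OF m1])
  then have "m * (P - L - \<epsilon>) \<le> P / (pi * \<delta>)" by (simp add: algebra_simps)
  then have "m * ((P - L) / 2) \<le> P / (pi * \<delta>)" by (simp add: \<epsilon>_def field_simps)
  moreover have "m > 2 * P / (pi * \<delta> * (P - L))" unfolding m_def by linarith
  then have "m * ((P - L) / 2) > (2 * P / (pi * \<delta> * (P - L))) * ((P - L) / 2)"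
    using PL by (intro mult_strict_right_mono) auto
  moreover have "(2 * P / (pi * \<delta> * (P - L))) * ((P - L) / 2) = P / (pi * \<delta>)"
    using PL d by (simp add: field_simps)
  ultimately show False by linarith
qed

lemma small_part:
  assumes d: "\<delta> > 0"
  shows "cr t - cd \<delta> t \<le> 4 * pi * A * KB * \<delta>\<^sup>2 * t\<^sup>2"
proof -
  have "cr t - cd \<delta> t = (LINT k|lborel. Phi k * (1 - cos (2 * pi * k * t)) - Pd \<delta> k * (1 - cos (2 * pi * k * t)))"
    unfolding cr_def cd_def by (rule Bochner_Integration.integral_diff[OF cr_integrand_int cd_integrand_int[OF d], symmetric])
  also have "\<dots> \<le> (LINT k|lborel. indicator {-\<delta>..\<delta>} k * (2 * pi * A * KB * \<delta> * t\<^sup>2))"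
  proof (rule Bochner_Integration.integral_mono)
    show "integrable lborel (\<lambda>k. Phi k * (1 - cos (2 * pi * k * t)) - Pd \<delta> k * (1 - cos (2 * pi * k * t)))"
      by (intro Bochner_Integration.integrable_diff cr_integrand_int cd_integrand_int d)
    show "integrable lborel (\<lambda>k. indicator {-\<delta>..\<delta>} k * (2 * pi * A * KB * \<delta> * t\<^sup>2))"
      using d by (intro integrable_mult_left integrable_real_indicator) (auto simp: emeasure_lborel_Icc_eq)
    fix k :: real
    show "Phi k * (1 - cos (2 * pi * k * t)) - Pd \<delta> k * (1 - cos (2 * pi * k * t)) \<le> indicator {-\<delta>..\<delta>} k * (2 * pi * A * KB * \<delta> * t\<^sup>2)"
    proof (cases "\<delta> < \<bar>k\<bar>")
      case True
      then have "k \<notin> {-\<delta>..\<delta>}" by auto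
      then show ?thesis using True by (simp add: Pd_def)
    next
      case False
      then have kin: "k \<in> {-\<delta>..\<delta>}" by auto
      have "Phi k * (1 - cos (2 * pi * k * t)) \<le> 2 * pi * A * KB * \<delta> * t\<^sup>2"
      proof (cases "k = 0")
        case True then show ?thesis using Apos KB_nn d by (simp add: Phi_def)
      next
        case k0: False
        have c0: "0 \<le> 1 - cos (2 * pi * k * t)" using cos_le_one by simp
        have "Phi k * (1 - cos (2 * pi * k * t)) \<le> (A * KB / (pi * \<bar>k\<bar>)) * ((2 * pi * k * t)\<^sup>2 / 2)"
          using Phi_bound[of "\<bar>k\<bar>" k] k0 c0 one_minus_cos_le[of "2 * pi * k * t"] Phi_nn[of k]
          by (intro mult_mono) auto
        also have "\<dots> = 2 * pi * A * KB * \<bar>k\<bar> * t\<^sup>2"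
          using k0 by (simp add: power2_eq_square field_simps abs_mult_self_eq)
        also have "\<dots> \<le> 2 * pi * A * KB * \<delta> * t\<^sup>2"
          using False Apos KB_nn by (intro mult_right_mono mult_left_mono) auto
        finally show ?thesis .
      qed
      then show ?thesis using kin False by (simp add: Pd_def indicator_def)
    qed
  qed
  also have "\<dots> = 2 * pi * A * KB * \<delta> * t\<^sup>2 * (\<delta> - - \<delta>)"
    using d by (intro int_ind_Icc) simp
  also have "\<dots> = 4 * pi * A * KB * \<delta>\<^sup>2 * t\<^sup>2" by (simp add: power2_eq_square)
  finally show ?thesis .
qed

lemma cr_le_2L: "cr t \<le> 2 * L"
proof (rule ccontr)
  assume "\<not> cr t \<le> 2 * L"
  then have gap: "cr t - 2 * L > 0" by simp
  define C where "C = 4 * pi * A * KB * (t\<^sup>2 + 1) + 1"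
  have C0: "C > 0" unfolding C_def using Apos KB_nn by (intro add_nonneg_pos) auto
  define \<delta> where "\<delta> = min 1 ((cr t - 2 * L) / (2 * C))"
  have d0: "\<delta> > 0" unfolding \<delta>_def using gap C0 by simp
  have d1: "\<delta> \<le> 1" unfolding \<delta>_def by simp
  have d2: "\<delta> \<le> (cr t - 2 * L) / (2 * C)" unfolding \<delta>_def by simp
  have h1: "cd \<delta> t \<le> 2 * L"
    using cd_bound[OF d0, of t] tail_le[OF d0] by simp
  have h2: "cr t - cd \<delta> t \<le> 4 * pi * A * KB * \<delta>\<^sup>2 * t\<^sup>2" by (rule small_part[OF d0])
  have h3: "4 * pi * A * KB * \<delta>\<^sup>2 * t\<^sup>2 \<le> C * \<delta>"
  proof -
    have "\<delta>\<^sup>2 \<le> \<delta>" using d0 d1 by (simp add: power2_eq_square mult_le_cancel_left1)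
    then have "4 * pi * A * KB * \<delta>\<^sup>2 * t\<^sup>2 \<le> 4 * pi * A * KB * \<delta> * t\<^sup>2"
      using Apos KB_nn by (intro mult_right_mono mult_left_mono) auto
    also have "\<dots> \<le> (4 * pi * A * KB * (t\<^sup>2 + 1)) * \<delta>"
      using Apos KB_nn d0 by (simp add: algebra_simps)
    also have "\<dots> \<le> C * \<delta>" unfolding C_def using d0 by (simp add: algebra_simps)
    finally show ?thesis .
  qed
  have h4: "C * \<delta> \<le> (cr t - 2 * L) / 2"
    using d2 C0 by (simp add: field_simps)
  define Y where "Y = 4 * pi * A * KB * \<delta>\<^sup>2 * t\<^sup>2"
  define Z where "Z = C * \<delta>"
  have "cd \<delta> t \<le> 2 * L" "cr t - cd \<delta> t \<le> Y" "Y \<le> Z" "2 * Z \<le> cr t - 2 * L"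
    using h1 h2 h3 h4 unfolding Y_def Z_def by auto
  then show False using gap by linarith
qed

lemma main_ineq: "norm (G t) \<le> norm (G 0)"
proof -
  have "G t = complex_of_real (cr t - L)"
    using G_cr[of t] G0_real by (simp add: algebra_simps)
  then have "norm (G t) = \<bar>cr t - L\<bar>" by (simp only: norm_of_real)
  also have "\<dots> \<le> L" using cr_nn[of t] cr_le_2L[of t] by simp
  also have "\<dots> = norm (G 0)" using G0_real L_nn by simp
  finally show ?thesis .
qed

end


theorem lemma2:
  fixes lam NA A \<theta> :: real and q :: "real \<times> real \<Rightarrow> real"
  assumes "lam > 0" and "NA > 0" and "A > 0"
    and "\<And>\<rho>. q \<rho> \<ge> 0"
    and "q \<in> borel_measurable lborel"
    and "\<exists>B. \<forall>\<rho>. q \<rho> \<le> B"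
    and "\<And>\<rho>. \<rho> \<notin> half_disk lam NA \<theta> \<Longrightarrow> q \<rho> = 0"
  shows "\<forall>r. let v = (- sin \<theta>, cos \<theta>);
               g = conv2 (inv_FT2 (Htilde A lam NA q)) (step_edge \<theta>)
           in norm (g r) \<le> norm (g ((r \<bullet> v) *\<^sub>R v))"
proof
  fix r :: "real \<times> real"
  interpret LS lam NA A \<theta> q
    by unfold_locales (use assms in auto)
  have v: "(- sin \<theta>, cos \<theta>) = vvec \<theta>" by (simp add: vvec_def)
  have vn: "((r \<bullet> vvec \<theta>) *\<^sub>R vvec \<theta>) \<bullet> nvec \<theta> = 0"
    by (simp add: vvec_def nvec_def inner_prod_def algebra_simps)
  show "let v = (- sin \<theta>, cos \<theta>);
               g = conv2 (inv_FT2 (Htilde A lam NA q)) (step_edge \<theta>)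
           in norm (g r) \<le> norm (g ((r \<bullet> v) *\<^sub>R v))"
    unfolding Let_def v conv2_G vn by (rule main_ineq)
qed


end
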